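(* Let $F$ and $\tau=\tau_F$ be as in the context, and let $\tau_{\mathbf n}:=\widehat\tau_{\mathbf n}$ be the coefficients of the $d$-fold Walsh series generating $\tau$. Let $\sum_{\mathbf n\in\mathbb N_0^d}\psi_{\mathbf n}W_{\mathbf n}$ be a $d$-fold Walsh series which converges to zero by rectangles (or by cubes) at every point of $\mathbb G^d\setminus F$, and suppose $\psi_{\mathbf n}=o(\tau_{\mathbf n})$ as $\max_jn^j\to\infty$, i.e. there is a function $\varepsilon(\mathbf n)\to0$ as $\max_jn^j\to\infty$ with $|\psi_{\mathbf n}|\le\varepsilon(\mathbf n)|\tau_{\mathbf n}|$. Then $\psi_{\mathbf n}=0$ for all $\mathbf n$.
   Context: Fix an integer $d\ge 2$. $\mathbb G$ is the dyadic group: sequences $g=(g_k)_{k\ge0}$, $g_k\in\{0,1\}$, with coordinatewise addition mod 2 ($\oplus$) and product topology; $\mathbb G^d$ its $d$-th power, $\mu$ the normalized Haar measure. For $n\in\mathbb N_0$, $n=\sum_kn_k2^k$, $n_k\in\{0,1\}$. Dyadic interval of rank $k$: $\Delta^{(k)}_m=\{g: g_t=m_{k-1-t},\ 0\le t<k\}$; dyadic cube $\Delta^{(k)}_{\mathbf m}=\prod_l\Delta^{(k)}_{m^l}$, $\mathbf m\in\{0,\dots,2^k-1\}^d$. Vector order coordinatewise, $\mathbf 1=(1,\dots,1)$. Walsh functions $W_n(g)=\prod_k(-1)^{g_kn_k}$, $W_{\mathbf n}(\mathbf g)=\prod_lW_{n^l}(g^l)$; $W^{(k)}_{\mathbf n\mathbf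 m}$ is the constant value of $W_{\mathbf n}$ on $\Delta^{(k)}_{\mathbf m}$ ($\mathbf n,\mathbf m<2^k\mathbf 1$); $R_{k\mathbf 1}:=W_{2^k\mathbf 1}$. Partial sums of $\sum a_{\mathbf n}W_{\mathbf n}$: $S_{\mathbf N}=\sum_{\mathbf n<\mathbf N}a_{\mathbf n}W_{\mathbf n}$; convergence by rectangles means $S_{\mathbf N}(\mathbf g)\to S$ as $\min_jN^j\to\infty$, by cubes means $S_{N\mathbf 1}(\mathbf g)\to S$ as $N\to\infty$. Quasimeasure: $\tau$ on dyadic cubes with $\tau(\Delta^{(k)}_{\mathbf m})=\sum_{\boldsymbol\sigma\in\{0,1\}^d}\tau(\Delta^{(k+1)}_{2\mathbf m+\boldsymbol\sigma})$; $\widehat\tau_{\mathbf n}=\sum_{\mathbf m<2^k\mathbf 1}W^{(k)}_{\mathbf n\mathbf m}\tau(\Delta^{(k)}_{\mathbf m})$ for $\mathbf n<2^k\mathbf 1$; the series $\sum\widehat\tau_{\mathbf n}W_{\mathbf n}$ generates $\tau$. For nonempty closed $E$, $\tau_E$ is the unique nonnegative quasimeasure with $\tau_E(\mathbb G^d)=1$, $\tau_E(\Delta)=0$ iff $\Delta\cap E=\emptyset$, which splits the value of any cube meeting $E$ equally among those of its $2^d$ children meeting $E$. The set $F$: $m_1=0$, $m_{s+1}=2(2m_s+1)$; $F_s=\bigcup_{\mathbf m,\mathbf m'<2^{m_s}\mathbf 1}\{\mathbf g\in\Delta^{(2m_s)}_{2^{m_s}\mathbf m+\mathbf m'}: R_{2m_s\mathbf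 1}(\mathbf g)=W^{(m_s)}_{\mathbf m\mathbf m'}\}$; $F=\bigcap_{s\ge1}F_s$. *)

theory Defs
  imports "HOL-Analysis.Analysis"
begin

text \<open>Dimension d is CARD('d) for a finite index type 'd.
 A point of the dyadic group G is a 0/1 sequence, encoded as nat => bool
 (True = 1). A point of G^d is a function 'd => (nat => bool).
 Multi-indices in N_0^d are functions 'd => nat.\<close>

type_synonym dyad = "nat \<Rightarrow> bool"

text \<open>Walsh function W_n(g) = prod_k (-1)^(g_k n_k).\<close>
definition walsh :: "nat \<Rightarrow> dyad \<Rightarrow> real" where
  "walsh n g = (-1) ^ card {k. bit n k \<and> g k}"

definition walshd :: "('d::finite \<Rightarrow> nat) \<Rightarrow> ('d \<Rightarrow> dyad) \<Rightarrow> real" where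
  "walshd n g = (\<Prod>l\<in>UNIV. walsh (n l) (g l))"

definition dint :: "nat \<Rightarrow> nat \<Rightarrow> dyad set" where
  "dint k m = {g. \<forall>t<k. g t = bit m (k - 1 - t)}"

definition dcube :: "nat \<Rightarrow> ('d::finite \<Rightarrow> nat) \<Rightarrow> ('d \<Rightarrow> dyad) set" where
  "dcube k m = {g. \<forall>l. g l \<in> dint k (m l)}"

definition idx :: "nat \<Rightarrow> ('d::finite \<Rightarrow> nat) set" where
  "idx k = {m. \<forall>l. m l < 2 ^ k}"

definition cube_pt :: "nat \<Rightarrow> ('d::finite \<Rightarrow> nat) \<Rightarrow> ('d \<Rightarrow> dyad)" where
  "cube_pt k m = (\<lambda>l t. t < k \<and> bit (m l) (k - 1 - t))"

text \<open>W^(k)_{n m}: constant value of W_n on Delta^(k)_m.\<close>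
definition Wk :: "nat \<Rightarrow> ('d::finite \<Rightarrow> nat) \<Rightarrow> ('d \<Rightarrow> nat) \<Rightarrow> real" where
  "Wk k n m = walshd n (cube_pt k m)"

definition Rk :: "nat \<Rightarrow> ('d::finite \<Rightarrow> dyad) \<Rightarrow> real" where
  "Rk k g = walshd (\<lambda>_. 2 ^ k) g"

text \<open>The quasimeasure tau_E, given on the cube Delta^(k)_m as tauE E k m:
 total mass 1, zero on cubes missing E, and each cube meeting E splits its
 value equally among its 2^d children meeting E.\<close>
fun tauE :: "('d::finite \<Rightarrow> dyad) set \<Rightarrow> nat \<Rightarrow> ('d \<Rightarrow> nat) \<Rightarrow> real" where
  "tauE E 0 m = 1"
| "tauE E (Suc k) m =
     (if dcube (Suc k) m \<inter> E = {} then 0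
      else tauE E k (\<lambda>l. m l div 2) /
        real (card {\<sigma> :: 'd \<Rightarrow> nat. (\<forall>l. \<sigma> l < 2) \<and>
                 dcube (Suc k) (\<lambda>l. 2 * (m l div 2) + \<sigma> l) \<inter> E \<noteq> {}}))"

text \<open>Fourier-Walsh coefficients of a quasimeasure given on cubes, computed
 at the least rank k with n < 2^k 1.\<close>
definition rank_of :: "('d::finite \<Rightarrow> nat) \<Rightarrow> nat" where
  "rank_of n = (LEAST k. \<forall>l. n l < 2 ^ k)"

definition qhat :: "(nat \<Rightarrow> ('d::finite \<Rightarrow> nat) \<Rightarrow> real) \<Rightarrow> ('d \<Rightarrow> nat) \<Rightarrow> real" where
  "qhat \<tau> n = (let k = rank_of n in \<Sum>m\<in>idx k. Wk k n m * \<tau> k m)"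

text \<open>The sequence m_s (s >= 1) is ms (s - 1): m_1 = 0, m_(s+1) = 2(2 m_s + 1).\<close>
fun ms :: "nat \<Rightarrow> nat" where
  "ms 0 = 0"
| "ms (Suc s) = 2 * (2 * ms s + 1)"

definition Fs :: "nat \<Rightarrow> ('d::finite \<Rightarrow> dyad) set" where
  "Fs q = (\<Union>m\<in>idx q. \<Union>m'\<in>idx q.
      {g \<in> dcube (2 * q) (\<lambda>l. 2 ^ q * m l + m' l). Rk (2 * q) g = Wk q m m'})"

definition Fset :: "('d::finite \<Rightarrow> dyad) set" where
  "Fset = (\<Inter>s. Fs (ms s))"

definition psum :: "(('d::finite \<Rightarrow> nat) \<Rightarrow> real) \<Rightarrow> ('d \<Rightarrow> nat) \<Rightarrow> ('d \<Rightarrow> dyad) \<Rightarrow> real" where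
  "psum a N g = (\<Sum>n\<in>{n. \<forall>l. n l < N l}. a n * walshd n g)"

definition conv_rect :: "(('d::finite \<Rightarrow> nat) \<Rightarrow> real) \<Rightarrow> ('d \<Rightarrow> dyad) \<Rightarrow> real \<Rightarrow> bool" where
  "conv_rect a g S \<longleftrightarrow>
     (\<forall>e>0. \<exists>M. \<forall>N. (\<forall>l. M \<le> N l) \<longrightarrow> \<bar>psum a N g - S\<bar> < e)"

definition conv_cube :: "(('d::finite \<Rightarrow> nat) \<Rightarrow> real) \<Rightarrow> ('d \<Rightarrow> dyad) \<Rightarrow> real \<Rightarrow> bool" where
  "conv_cube a g S \<longleftrightarrow> (\<lambda>N. psum a (\<lambda>_. N) g) \<longlonglongrightarrow> S"

end

theory Submission
  imports Defs
begin


lemma less2_cases: "(v::nat) < 2 \<Longrightarrow> v = 0 \<or> v = 1" by auto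

lemma bit_nat_odd: "bit (a::nat) t \<longleftrightarrow> odd (a div 2^t)"
  by (simp add: bit_iff_odd)

lemma bit_ge_False: "(n::nat) < 2^K \<Longrightarrow> K \<le> t \<Longrightarrow> \<not> bit n t"
proof -
  assume a: "n < 2^K" "K \<le> t"
  have "(2::nat)^K \<le> 2^t" using a(2) by (simp add: power_increasing)
  then have "n div 2^t = 0" using a(1) by (metis div_less less_le_trans)
  then show ?thesis by (simp add: bit_nat_odd)
qed

lemma bit_2ab_0: "(b::nat) < 2 \<Longrightarrow> bit (2*a + b) 0 \<longleftrightarrow> b = 1"
  by (auto simp: bit_nat_odd elim: oddE)

lemma bit_2ab_Suc: "(b::nat) < 2 \<Longrightarrow> bit (2*a + b) (Suc i) \<longleftrightarrow> bit a i"
proof -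
  assume "b < 2"
  then have "(2*a+b) div 2 = a" by simp
  then show ?thesis by (metis bit_Suc)
qed

lemma bit_add_high:
  assumes "(n'::nat) < 2^k" "v < 2"
  shows "bit (n' + 2^k * v) t \<longleftrightarrow> (if t < k then bit n' t else t = k \<and> v = 1)"
proof (cases "t < k")
  case True
  have "(n' + 2^k * v) div 2^t = n' div 2^t + 2^(k-t) * v"
  proof -
    obtain j where kj: "k = t + j" using True less_imp_add_positive by blast
    have "(2::nat)^k * v = (2^(k-t) * v) * 2^t" unfolding kj by (simp add: power_add)
    then have "(n' + 2^k * v) div 2^t = (n' + (2^(k-t) * v) * 2^t) div 2^t"
      by (rule arg_cong[where f="\<lambda>x. (n' + x) div 2^t"])
    also have "\<dots> = 2^(k-t) * v + n' div 2^t" by (rule div_mult_self1) simp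
    finally show ?thesis by simp
  qed
  moreover have "even ((2::nat)^(k-t) * v)" using True by simp
  ultimately show ?thesis using True by (simp add: bit_nat_odd)
next
  case False
  show ?thesis
  proof (cases "t = k")
    case True
    have "(n' + 2^k * v) div 2^k = v" using assms by simp
    then show ?thesis using True assms by (auto simp: bit_nat_odd elim: oddE)
  next
    case f2: False
    then have "k < t" using False by simp
    have "n' + 2^k * v < 2^(Suc k)" using assms less2_cases[of v] by auto
    then have "\<not> bit (n' + 2^k * v) t" using bit_ge_False[of _ "Suc k" t] \<open>k<t\<close> by auto
    then show ?thesis using False f2 by simp
  qed
qed

lemma walsh_prod:
  assumes "n < 2^K"
  shows "walsh n x = (\<Prod>t<K. if bit n t \<and> x t then -1 else 1)"
proof -
  have sub: "{t. bit n t \<and> x t} = {..<K} \<inter> {t. bit n t \<and> x t}"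
    using bit_ge_False[OF assms] by (auto simp: not_less[symmetric])
  have "(\<Prod>t<K. if bit n t \<and> x t then -1 else 1) =
        (\<Prod>t\<in>{..<K} \<inter> {t. bit n t \<and> x t}. (-1::real)) * (\<Prod>t\<in>{..<K} \<inter> - {t. bit n t \<and> x t}. 1)"
    by (rule prod.If_cases) simp
  also have "\<dots> = (-1) ^ card ({..<K} \<inter> {t. bit n t \<and> x t})" by simp
  finally show ?thesis unfolding walsh_def using sub by simp
qed

definition bS :: "('d::finite \<Rightarrow> nat) set" where
  "bS = {\<sigma>. \<forall>l. \<sigma> l < 2}"

definition chi :: "('d::finite \<Rightarrow> nat) \<Rightarrow> ('d \<Rightarrow> nat) \<Rightarrow> real" where
  "chi v \<sigma> = (\<Prod>l\<in>UNIV. if v l = 1 \<and> \<sigma> l = 1 then -1 else 1)"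

definition dig :: "nat \<Rightarrow> ('d::finite \<Rightarrow> dyad) \<Rightarrow> ('d \<Rightarrow> nat)" where
  "dig k g = (\<lambda>l. if g l k then 1 else 0)"

lemma dig_bS: "dig k g \<in> bS" by (simp add: dig_def bS_def)

lemma idx_PiE: "idx k = Pi\<^sub>E UNIV (\<lambda>_. {..<2^k})"
  by (auto simp: idx_def PiE_UNIV_domain)

lemma bS_PiE: "bS = Pi\<^sub>E UNIV (\<lambda>_. {..<2})"
  by (auto simp: bS_def PiE_UNIV_domain)

lemma finite_idx[simp]: "finite (idx k :: ('d::finite \<Rightarrow> nat) set)"
  unfolding idx_PiE by (rule finite_PiE) auto

lemma finite_bS[simp]: "finite (bS :: ('d::finite \<Rightarrow> nat) set)"
  unfolding bS_PiE by (rule finite_PiE) auto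

lemma card_bS: "card (bS :: ('d::finite \<Rightarrow> nat) set) = 2 ^ CARD('d)"
  unfolding bS_PiE by (simp add: card_PiE)

lemma walshd_dep:
  assumes "n \<in> idx K" "\<And>l t. t < K \<Longrightarrow> g l t = h l t"
  shows "walshd n g = walshd n h"
proof -
  have "walsh (n l) (g l) = walsh (n l) (h l)" for l
    using assms by (simp add: walsh_prod[of "n l" K] idx_def)
  then show ?thesis by (simp add: walshd_def)
qed

lemma walsh_split:
  assumes "(n'::nat) < 2^k" "v < 2"
  shows "walsh (n' + 2^k * v) x = walsh n' x * (if v = 1 \<and> x k then -1 else 1)"
proof -
  have lt: "n' + 2^k * v < 2^Suc k" using assms less2_cases[of v] by auto
  have "walsh (n' + 2^k * v) x = (\<Prod>t<Suc k. if bit (n' + 2^k * v) t \<and> x t then -1 else 1)"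
    by (rule walsh_prod[OF lt])
  also have "\<dots> = (\<Prod>t<k. if bit (n' + 2^k * v) t \<and> x t then -1 else 1) *
      (if bit (n' + 2^k * v) k \<and> x k then -1 else 1)" by simp
  also have "(\<Prod>t<k. if bit (n' + 2^k * v) t \<and> x t then -1 else (1::real)) =
      (\<Prod>t<k. if bit n' t \<and> x t then -1 else 1)"
    by (rule prod.cong) (simp_all add: bit_add_high[OF assms])
  also have "\<dots> = walsh n' x" by (rule walsh_prod[OF assms(1), symmetric])
  finally show ?thesis by (simp add: bit_add_high[OF assms] conj_commute)
qed

lemma walshd_split:
  assumes "n' \<in> idx k" "v \<in> bS"
  shows "walshd (\<lambda>l. n' l + 2^k * v l) g = walshd n' g * chi v (dig k g)"
proof -
  have "walsh (n' l + 2^k * v l) (g l) = walsh (n' l) (g l) *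
      (if v l = 1 \<and> dig k g l = 1 then -1 else 1)" for l
    using assms walsh_split[of "n' l" k "v l" "g l"] by (simp add: idx_def bS_def dig_def)
  then show ?thesis by (simp add: walshd_def chi_def prod.distrib)
qed

lemma walsh_sq: "walsh n x * walsh n x = 1"
  by (simp add: walsh_def power_add[symmetric])

lemma walshd_sq: "walshd n g * walshd n g = 1"
proof -
  have "walshd n g * walshd n g = (\<Prod>l\<in>UNIV. walsh (n l) (g l) * walsh (n l) (g l))"
    by (simp add: walshd_def prod.distrib)
  also have "\<dots> = 1" by (simp add: walsh_sq)
  finally show ?thesis .
qed

lemma dcube_iff: "g \<in> dcube k m \<longleftrightarrow> (\<forall>l t. t < k \<longrightarrow> g l t = bit (m l) (k - 1 - t))"
  by (auto simp: dcube_def dint_def)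

lemma cube_pt_in: "cube_pt k m \<in> dcube k m"
  by (simp add: dcube_iff cube_pt_def)

lemma dcube_agree: "g \<in> dcube k m \<Longrightarrow> h \<in> dcube k m \<Longrightarrow> t < k \<Longrightarrow> g l t = h l t"
  by (simp add: dcube_iff)

lemma dcube_dep: "g \<in> dcube k m \<Longrightarrow> (\<And>l t. t < k \<Longrightarrow> g l t = h l t) \<Longrightarrow> h \<in> dcube k m"
  by (simp add: dcube_iff)

lemma dcube_child:
  assumes "\<sigma> \<in> bS"
  shows "g \<in> dcube (Suc k) (\<lambda>l. 2 * p l + \<sigma> l) \<longleftrightarrow> g \<in> dcube k p \<and> dig k g = \<sigma>"
proof -
  have s2: "\<sigma> l < 2" for l using assms by (simp add: bS_def)
  have A: "bit (2 * p l + \<sigma> l) (Suc k - 1 - t) = (if t = k then \<sigma> l = 1 else bit (p l) (k - 1 - t))"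
    if "t < Suc k" for l t
  proof (cases "t = k")
    case True then show ?thesis using bit_2ab_0[OF s2] by simp
  next
    case False
    then have "Suc k - 1 - t = Suc (k - 1 - t)" using that by simp
    then show ?thesis using False bit_2ab_Suc[OF s2] by simp
  qed
  have B: "dig k g = \<sigma> \<longleftrightarrow> (\<forall>l. g l k = (\<sigma> l = 1))"
  proof -
    have "((if g l k then 1 else 0) = \<sigma> l) \<longleftrightarrow> (g l k = (\<sigma> l = 1))" for l
      using less2_cases[OF s2[of l]] by auto
    then show ?thesis by (simp add: dig_def fun_eq_iff)
  qed
  show ?thesis unfolding dcube_iff B using A
    by (auto simp: less_Suc_eq)
qed

lemma idx_child: "p \<in> idx k \<Longrightarrow> \<sigma> \<in> bS \<Longrightarrow> (\<lambda>l. 2 * p l + \<sigma> l) \<in> idx (Suc k)"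
proof -
  assume a: "p \<in> idx k" "\<sigma> \<in> bS"
  have "2 * p l + \<sigma> l < 2 ^ Suc k" for l
  proof -
    have "p l + 1 \<le> 2^k" using a by (simp add: idx_def Suc_le_eq)
    then have "2 * p l + 2 \<le> 2 ^ Suc k" by simp
    moreover have "\<sigma> l < 2" using a by (simp add: bS_def)
    ultimately show ?thesis by linarith
  qed
  then show ?thesis by (simp add: idx_def)
qed

lemma idx_parent: "m \<in> idx (Suc k) \<Longrightarrow> (\<lambda>l. m l div 2) \<in> idx k"
  by (auto simp: idx_def) (metis less_mult_imp_div_less mult.commute)

lemma idx_high: "n' \<in> idx k \<Longrightarrow> v \<in> bS \<Longrightarrow> (\<lambda>l. n' l + 2^k * v l) \<in> idx (Suc k)"
proof -
  assume a: "n' \<in> idx k" "v \<in> bS"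
  have "n' l + 2^k * v l < 2 ^ Suc k" for l
  proof -
    have "n' l < 2^k" "v l < 2" using a by (auto simp: idx_def bS_def)
    then show ?thesis using less2_cases[of "v l"] by auto
  qed
  then show ?thesis by (simp add: idx_def)
qed

lemma idx_mono: "k \<le> k' \<Longrightarrow> m \<in> idx k \<Longrightarrow> m \<in> idx k'"
  by (auto simp: idx_def) (meson less_le_trans one_less_numeral_iff power_increasing_iff semiring_norm(76))

lemma sum_idx_Suc:
  fixes f :: "('d::finite \<Rightarrow> nat) \<Rightarrow> 'a::comm_monoid_add"
  shows "(\<Sum>m\<in>idx (Suc k). f m) = (\<Sum>p\<in>idx k. \<Sum>\<sigma>\<in>bS. f (\<lambda>l. 2 * p l + \<sigma> l))"
proof -
  have "(\<Sum>p\<in>idx k. \<Sum>\<sigma>\<in>bS. f (\<lambda>l. 2 * p l + \<sigma> l)) =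
      (\<Sum>(p,\<sigma>)\<in>idx k \<times> bS. f (\<lambda>l. 2 * p l + \<sigma> l))"
    by (rule sum.cartesian_product)
  also have "\<dots> = (\<Sum>m\<in>idx (Suc k). f m)"
  proof (rule sum.reindex_bij_witness[where j = "\<lambda>(p,\<sigma>). (\<lambda>l. 2 * p l + \<sigma> l)"
        and i = "\<lambda>m. ((\<lambda>l. m l div 2), (\<lambda>l. m l mod 2))"])
    fix a assume "a \<in> (idx k :: ('d \<Rightarrow> nat) set) \<times> (bS :: ('d \<Rightarrow> nat) set)"
    then show "(\<lambda>m. ((\<lambda>l. m l div 2), (\<lambda>l. m l mod 2))) ((\<lambda>(p,\<sigma>). (\<lambda>l. 2 * p l + \<sigma> l)) a) = a"
      by (auto simp: bS_def)
  next
    fix a assume "a \<in> (idx k :: ('d \<Rightarrow> nat) set) \<times> (bS :: ('d \<Rightarrow> nat) set)"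
    then show "(\<lambda>(p,\<sigma>). (\<lambda>l. 2 * p l + \<sigma> l)) a \<in> idx (Suc k)"
      by (auto intro: idx_child)
  next
    fix b :: "'d \<Rightarrow> nat" assume "b \<in> idx (Suc k)"
    then show "(\<lambda>(p,\<sigma>). (\<lambda>l. 2 * p l + \<sigma> l)) ((\<lambda>m. ((\<lambda>l. m l div 2), (\<lambda>l. m l mod 2))) b) = b"
      by auto
  next
    fix b :: "'d \<Rightarrow> nat" assume "b \<in> idx (Suc k)"
    then show "(\<lambda>m. ((\<lambda>l. m l div 2), (\<lambda>l. m l mod 2))) b \<in> idx k \<times> bS"
      by (auto simp: bS_def intro: idx_parent)
  qed auto
  finally show ?thesis by simp
qed

lemma sum_idx_Suc_high:
  fixes f :: "('d::finite \<Rightarrow> nat) \<Rightarrow> 'a::comm_monoid_add"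
  shows "(\<Sum>n\<in>idx (Suc k). f n) = (\<Sum>n'\<in>idx k. \<Sum>v\<in>bS. f (\<lambda>l. n' l + 2^k * v l))"
proof -
  have "(\<Sum>p\<in>idx k. \<Sum>\<sigma>\<in>bS. f (\<lambda>l. p l + 2^k * \<sigma> l)) =
      (\<Sum>(p,\<sigma>)\<in>idx k \<times> bS. f (\<lambda>l. p l + 2^k * \<sigma> l))"
    by (rule sum.cartesian_product)
  also have "\<dots> = (\<Sum>m\<in>idx (Suc k). f m)"
  proof (rule sum.reindex_bij_witness[where j = "\<lambda>(p,\<sigma>). (\<lambda>l. p l + 2^k * \<sigma> l)"
        and i = "\<lambda>m. ((\<lambda>l. m l mod 2^k), (\<lambda>l. m l div 2^k))"])
    fix a assume "a \<in> (idx k :: ('d \<Rightarrow> nat) set) \<times> (bS :: ('d \<Rightarrow> nat) set)"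
    then show "(\<lambda>m. ((\<lambda>l. m l mod 2^k), (\<lambda>l. m l div 2^k))) ((\<lambda>(p,\<sigma>). (\<lambda>l. p l + 2^k * \<sigma> l)) a) = a"
      by (auto simp: bS_def idx_def)
  next
    fix a assume "a \<in> (idx k :: ('d \<Rightarrow> nat) set) \<times> (bS :: ('d \<Rightarrow> nat) set)"
    then show "(\<lambda>(p,\<sigma>). (\<lambda>l. p l + 2^k * \<sigma> l)) a \<in> idx (Suc k)"
      by (auto intro: idx_high)
  next
    fix b :: "'d \<Rightarrow> nat" assume "b \<in> idx (Suc k)"
    then show "(\<lambda>(p,\<sigma>). (\<lambda>l. p l + 2^k * \<sigma> l)) ((\<lambda>m. ((\<lambda>l. m l mod 2^k), (\<lambda>l. m l div 2^k))) b) = b"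
      by auto
  next
    fix b :: "'d \<Rightarrow> nat" assume "b \<in> idx (Suc k)"
    then show "(\<lambda>m. ((\<lambda>l. m l mod 2^k), (\<lambda>l. m l div 2^k))) b \<in> idx k \<times> bS"
      by (auto simp: bS_def idx_def less_mult_imp_div_less)
  qed auto
  finally show ?thesis by simp
qed



lemma dcube_unique:
  assumes "p \<in> idx k" "p' \<in> idx k" "g \<in> dcube k p" "g \<in> dcube k p'"
  shows "p = p'"
proof
  fix l
  show "p l = p' l"
  proof (rule bit_eqI)
    fix t
    show "bit (p l) t = bit (p' l) t"
    proof (cases "t < k")
      case True
      then have "k - 1 - (k - 1 - t) = t" by simp
      moreover have "k - 1 - t < k" using True by simp
      have "g l (k - 1 - t) = bit (p l) (k - 1 - (k - 1 - t))"
        using assms(3) \<open>k - 1 - t < k\<close> by (simp add: dcube_iff)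
      moreover have "g l (k - 1 - t) = bit (p' l) (k - 1 - (k - 1 - t))"
        using assms(4) \<open>k - 1 - t < k\<close> by (simp add: dcube_iff)
      ultimately show ?thesis using \<open>k - 1 - (k - 1 - t) = t\<close> by simp
    next
      case False
      then show ?thesis using assms(1,2) bit_ge_False[of _ k t] by (simp add: idx_def)
    qed
  qed
qed

lemma dcube_exists: "\<exists>p\<in>idx k. g \<in> dcube k p"
proof (induction k)
  case 0
  have "(\<lambda>_. 0) \<in> idx 0" by (simp add: idx_def)
  moreover have "g \<in> dcube 0 (\<lambda>_. 0)" by (simp add: dcube_iff)
  ultimately show ?case by blast
next
  case (Suc k)
  then obtain p where p: "p \<in> idx k" "g \<in> dcube k p" by blast
  have "(\<lambda>l. 2 * p l + dig k g l) \<in> idx (Suc k)" by (rule idx_child[OF p(1) dig_bS])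
  moreover have "g \<in> dcube (Suc k) (\<lambda>l. 2 * p l + dig k g l)"
    using dcube_child[OF dig_bS] p by blast
  ultimately show ?case by blast
qed

lemma idx_decomp_high:
  assumes "n \<in> idx (Suc k)"
  shows "(\<lambda>l. n l mod 2^k) \<in> idx k" "(\<lambda>l. n l div 2^k) \<in> bS"
    "n = (\<lambda>l. (n l mod 2^k) + 2^k * (n l div 2^k))"
proof -
  show "(\<lambda>l. n l mod 2^k) \<in> idx k" by (simp add: idx_def)
  have "n l div 2^k < 2" for l
  proof -
    have "n l < 2 * 2^k" using assms by (simp add: idx_def)
    then show ?thesis by (simp add: less_mult_imp_div_less)
  qed
  then show "(\<lambda>l. n l div 2^k) \<in> bS" by (simp add: bS_def)
  show "n = (\<lambda>l. (n l mod 2^k) + 2^k * (n l div 2^k))" by (simp add: fun_eq_iff)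
qed

lemma idx_decomp_child:
  assumes "m \<in> idx (Suc k)"
  shows "(\<lambda>l. m l div 2) \<in> idx k" "(\<lambda>l. m l mod 2) \<in> bS"
    "m = (\<lambda>l. 2 * (m l div 2) + m l mod 2)"
proof -
  show "(\<lambda>l. m l div 2) \<in> idx k" by (rule idx_parent[OF assms])
  show "(\<lambda>l. m l mod 2) \<in> bS" by (simp add: bS_def)
  show "m = (\<lambda>l. 2 * (m l div 2) + m l mod 2)" by (simp add: fun_eq_iff)
qed

lemma idx0: "idx 0 = {(\<lambda>_. 0)}"
  by (auto simp: idx_def)

lemma Wk_split:
  assumes "n' \<in> idx k" "v \<in> bS" "p \<in> idx k" "\<sigma> \<in> bS"
  shows "Wk (Suc k) (\<lambda>l. n' l + 2^k * v l) (\<lambda>l. 2 * p l + \<sigma> l) = Wk k n' p * chi v \<sigma>"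
proof -
  let ?g = "cube_pt (Suc k) (\<lambda>l. 2 * p l + \<sigma> l)"
  have g: "?g \<in> dcube k p" "dig k ?g = \<sigma>"
    using cube_pt_in dcube_child[OF assms(4)] by blast+
  have "walshd n' ?g = walshd n' (cube_pt k p)"
    by (rule walshd_dep[OF assms(1)]) (rule dcube_agree[OF g(1) cube_pt_in])
  then show ?thesis unfolding Wk_def walshd_split[OF assms(1,2)] g(2) by simp
qed

definition flip :: "'d \<Rightarrow> ('d \<Rightarrow> nat) \<Rightarrow> ('d \<Rightarrow> nat)" where
  "flip l \<sigma> = \<sigma>(l := 1 - \<sigma> l)"

lemma flip_bS: "\<sigma> \<in> bS \<Longrightarrow> flip l \<sigma> \<in> bS"
  by (auto simp: flip_def bS_def)

lemma flip_flip: assumes "\<sigma> \<in> bS" shows "flip l (flip l \<sigma>) = \<sigma>"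
proof -
  have "\<sigma> l < 2" using assms by (simp add: bS_def)
  then show ?thesis by (auto simp: flip_def fun_eq_iff)
qed

lemma flip_other: "l' \<noteq> l \<Longrightarrow> flip l \<sigma> l' = \<sigma> l'"
  by (simp add: flip_def)

lemma chi_remove: "chi v \<sigma> = (if v l = 1 \<and> \<sigma> l = 1 then -1 else 1) *
   (\<Prod>l'\<in>UNIV - {l}. if v l' = 1 \<and> \<sigma> l' = 1 then -1 else 1)"
  unfolding chi_def by (rule prod.remove) auto

lemma chi_flip:
  assumes "\<sigma> \<in> bS"
  shows "chi v (flip l \<sigma>) = (if v l = 1 then - chi v \<sigma> else chi v \<sigma>)"
proof -
  have s: "\<sigma> l < 2" using assms by (simp add: bS_def)
  have eq: "(\<Prod>l'\<in>UNIV - {l}. if v l' = 1 \<and> flip l \<sigma> l' = 1 then -1 else (1::real)) =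
        (\<Prod>l'\<in>UNIV - {l}. if v l' = 1 \<and> \<sigma> l' = 1 then -1 else 1)"
    by (rule prod.cong) (auto simp: flip_other)
  have f: "flip l \<sigma> l = 1 - \<sigma> l" by (simp add: flip_def)
  have c1: "chi v (flip l \<sigma>) = (if v l = 1 \<and> flip l \<sigma> l = 1 then -1 else 1) *
   (\<Prod>l'\<in>UNIV - {l}. if v l' = 1 \<and> \<sigma> l' = 1 then -1 else 1)"
    using chi_remove[of v "flip l \<sigma>" l] eq by simp
  have c2: "chi v \<sigma> = (if v l = 1 \<and> \<sigma> l = 1 then -1 else 1) *
   (\<Prod>l'\<in>UNIV - {l}. if v l' = 1 \<and> \<sigma> l' = 1 then -1 else 1)"
    by (rule chi_remove)
  show ?thesis
    using c1 c2 f less2_cases[OF s] by auto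
qed

lemma sum_flip:
  fixes f :: "('d::finite \<Rightarrow> nat) \<Rightarrow> real"
  assumes "\<And>\<sigma>. \<sigma> \<in> A \<Longrightarrow> h \<sigma> \<in> A" "\<And>\<sigma>. \<sigma> \<in> A \<Longrightarrow> h (h \<sigma>) = \<sigma>"
    "\<And>\<sigma>. \<sigma> \<in> A \<Longrightarrow> f (h \<sigma>) = - f \<sigma>"
  shows "(\<Sum>\<sigma>\<in>A. f \<sigma>) = 0"
proof -
  have "(\<Sum>\<sigma>\<in>A. f \<sigma>) = (\<Sum>\<sigma>\<in>A. f (h \<sigma>))"
    by (rule sum.reindex_bij_witness[where i = h and j = h]) (simp_all add: assms(1,2))
  also have "\<dots> = - (\<Sum>\<sigma>\<in>A. f \<sigma>)" using assms(3) by (simp add: sum_negf)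
  finally show ?thesis by simp
qed

lemma chi_sum0:
  assumes "v \<in> bS" "v \<noteq> (\<lambda>_. 0)"
  shows "(\<Sum>\<sigma>\<in>bS. chi v \<sigma>) = 0"
proof -
  obtain l where l: "v l \<noteq> 0" using assms(2) by auto
  moreover have "v l < 2" using assms(1) by (simp add: bS_def)
  ultimately have "v l = 1" by simp
  then show ?thesis
    by (intro sum_flip[where h = "flip l"]) (auto simp: flip_bS flip_flip chi_flip)
qed

abbreviation one_v :: "'d::finite \<Rightarrow> nat" where "one_v \<equiv> (\<lambda>_. 1)"

lemma chi_flip2:
  assumes "\<sigma> \<in> bS" "l1 \<noteq> l2"
  shows "chi v (flip l1 (flip l2 \<sigma>)) =
     (if v l1 = 1 then -1 else 1) * (if v l2 = 1 then -1 else 1) * chi v \<sigma>"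
  using assms by (simp add: chi_flip flip_bS)

lemma chi_sum_par:
  fixes v :: "'d::finite \<Rightarrow> nat"
  assumes "v \<in> bS" "v \<noteq> (\<lambda>_. 0)" "v \<noteq> one_v"
  shows "(\<Sum>\<sigma>\<in>{\<sigma>\<in>bS. chi one_v \<sigma> = \<beta>}. chi v \<sigma>) = 0"
proof -
  obtain l1 where l1: "v l1 \<noteq> 0" using assms(2) by auto
  moreover have "v l1 < 2" using assms(1) by (simp add: bS_def)
  ultimately have v1: "v l1 = 1" by simp
  obtain l2 where l2: "v l2 \<noteq> 1" using assms(3) by auto
  have ne: "l1 \<noteq> l2" using v1 l2 by auto
  have fl: "flip l1 (flip l2 (flip l1 (flip l2 \<sigma>))) = \<sigma>" if "\<sigma> \<in> bS" for \<sigma>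
  proof -
    have "flip l1 (flip l2 \<sigma>) = flip l2 (flip l1 \<sigma>)"
      using ne by (auto simp: flip_def fun_eq_iff)
    then show ?thesis using that by (simp add: flip_flip flip_bS)
  qed
  have chi1: "chi one_v (flip l1 (flip l2 \<sigma>)) = chi one_v \<sigma>" if "\<sigma> \<in> bS" for \<sigma>
    using chi_flip2[OF that ne, of one_v] by simp
  have chiv: "chi v (flip l1 (flip l2 \<sigma>)) = - chi v \<sigma>" if "\<sigma> \<in> bS" for \<sigma>
    using chi_flip2[OF that ne, of v] v1 l2 by simp
  show ?thesis
  proof (rule sum_flip[where h = "\<lambda>\<sigma>. flip l1 (flip l2 \<sigma>)"])
    fix \<sigma> :: "'d \<Rightarrow> nat" assume a: "\<sigma> \<in> {\<sigma> \<in> bS. chi one_v \<sigma> = \<beta>}"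
    then show "flip l1 (flip l2 \<sigma>) \<in> {\<sigma> \<in> bS. chi one_v \<sigma> = \<beta>}"
      using chi1 by (simp add: flip_bS)
    show "flip l1 (flip l2 (flip l1 (flip l2 \<sigma>))) = \<sigma>" using a fl by simp
    show "chi v (flip l1 (flip l2 \<sigma>)) = - chi v \<sigma>" using a chiv by simp
  qed
qed

lemma chi_mult:
  assumes "v \<in> bS" "v' \<in> bS" "\<sigma> \<in> bS"
  shows "chi v \<sigma> * chi v' \<sigma> = chi (\<lambda>l. (v l + v' l) mod 2) \<sigma>"
proof -
  have "(if v l = 1 \<and> \<sigma> l = 1 then -1 else 1) * (if v' l = 1 \<and> \<sigma> l = 1 then -1 else 1) =
      (if (v l + v' l) mod 2 = 1 \<and> \<sigma> l = 1 then -1 else (1::real))" for l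
    using assms less2_cases[of "v l"] less2_cases[of "v' l"] by (auto simp: bS_def)
  then show ?thesis unfolding chi_def prod.distrib[symmetric] by simp
qed

lemma chi_zero: "chi (\<lambda>_. 0) \<sigma> = 1" by (simp add: chi_def)

lemma chi_orth:
  fixes v v' :: "'d::finite \<Rightarrow> nat"
  assumes "v \<in> bS" "v' \<in> bS"
  shows "(\<Sum>\<sigma>\<in>bS. chi v \<sigma> * chi v' \<sigma>) = (if v = v' then 2 ^ CARD('d) else 0)"
proof -
  have "(\<Sum>\<sigma>\<in>bS. chi v \<sigma> * chi v' \<sigma>) = (\<Sum>\<sigma>\<in>bS. chi (\<lambda>l. (v l + v' l) mod 2) \<sigma>)"
    by (rule sum.cong) (simp_all add: chi_mult assms)
  moreover have "(\<lambda>l. (v l + v' l) mod 2) = (\<lambda>_. 0) \<longleftrightarrow> v = v'"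
  proof -
    have "(v l + v' l) mod 2 = 0 \<longleftrightarrow> v l = v' l" for l
      using assms less2_cases[of "v l"] less2_cases[of "v' l"] by (auto simp: bS_def)
    then show ?thesis by (auto simp: fun_eq_iff)
  qed
  moreover have "(\<lambda>l. (v l + v' l) mod 2) \<in> bS" by (simp add: bS_def)
  ultimately show ?thesis
  proof (cases "v = v'")
    case True
    then show ?thesis using \<open>_ = (\<Sum>\<sigma>\<in>bS. chi (\<lambda>l. (v l + v' l) mod 2) \<sigma>)\<close>
      \<open>(\<lambda>l. (v l + v' l) mod 2) = (\<lambda>_. 0) \<longleftrightarrow> v = v'\<close> by (simp add: chi_zero card_bS)
  next
    case False
    then show ?thesis using \<open>_ = (\<Sum>\<sigma>\<in>bS. chi (\<lambda>l. (v l + v' l) mod 2) \<sigma>)\<close>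
      \<open>(\<lambda>l. (v l + v' l) mod 2) = (\<lambda>_. 0) \<longleftrightarrow> v = v'\<close>
      chi_sum0[OF \<open>(\<lambda>l. (v l + v' l) mod 2) \<in> bS\<close>] by simp
  qed
qed

lemma Wk_orth:
  fixes n n' :: "'d::finite \<Rightarrow> nat"
  assumes "n \<in> idx k" "n' \<in> idx k"
  shows "(\<Sum>m\<in>idx k. Wk k n m * Wk k n' m) = (if n = n' then 2 ^ (CARD('d) * k) else 0)"
  using assms
proof (induction k arbitrary: n n')
  case 0
  then show ?case by (simp add: idx0 Wk_def walshd_def walsh_def)
next
  case (Suc k)
  define a where "a = (\<lambda>l. n l mod 2^k)"
  define v where "v = (\<lambda>l. n l div 2^k)"
  define a' where "a' = (\<lambda>l. n' l mod 2^k)"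
  define v' where "v' = (\<lambda>l. n' l div 2^k)"
  have av: "a \<in> idx k" "v \<in> bS" "n = (\<lambda>l. a l + 2^k * v l)"
    unfolding a_def v_def by (rule idx_decomp_high[OF Suc.prems(1)])+
  have av': "a' \<in> idx k" "v' \<in> bS" "n' = (\<lambda>l. a' l + 2^k * v' l)"
    unfolding a'_def v'_def by (rule idx_decomp_high[OF Suc.prems(2)])+
  have "(\<Sum>m\<in>idx (Suc k). Wk (Suc k) n m * Wk (Suc k) n' m) =
     (\<Sum>p\<in>idx k. \<Sum>\<sigma>\<in>bS. (Wk k a p * Wk k a' p) * (chi v \<sigma> * chi v' \<sigma>))"
  proof -
    have "(\<Sum>m\<in>idx (Suc k). Wk (Suc k) n m * Wk (Suc k) n' m) =
      (\<Sum>m\<in>idx (Suc k). Wk (Suc k) (\<lambda>l. a l + 2^k * v l) m * Wk (Suc k) (\<lambda>l. a' l + 2^k * v' l) m)"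
      by (simp only: av(3)[symmetric] av'(3)[symmetric])
    also have "\<dots> = (\<Sum>p\<in>idx k. \<Sum>\<sigma>\<in>bS. (Wk k a p * Wk k a' p) * (chi v \<sigma> * chi v' \<sigma>))"
      unfolding sum_idx_Suc
      by (intro sum.cong refl) (simp add: Wk_split av(1,2) av'(1,2))
    finally show ?thesis .
  qed
  also have "\<dots> = (\<Sum>p\<in>idx k. Wk k a p * Wk k a' p) * (\<Sum>\<sigma>\<in>bS. chi v \<sigma> * chi v' \<sigma>)"
    by (simp add: sum_product)
  also have "\<dots> = (if a = a' then 2 ^ (CARD('d) * k) else 0) * (if v = v' then 2 ^ CARD('d) else 0)"
    using Suc.IH[OF av(1) av'(1)] chi_orth[OF av(2) av'(2)] by simp
  also have "\<dots> = (if n = n' then 2 ^ (CARD('d) * Suc k) else 0)"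
  proof -
    have "n = n' \<longleftrightarrow> a = a' \<and> v = v'"
    proof
      assume "n = n'" then show "a = a' \<and> v = v'" by (simp add: a_def a'_def v_def v'_def)
    next
      assume "a = a' \<and> v = v'" then show "n = n'" by (simp add: av(3) av'(3))
    qed
    moreover have "(2::real) ^ (CARD('d) * k) * 2 ^ CARD('d) = 2 ^ (CARD('d) * Suc k)"
      by (simp add: power_add[symmetric])
    ultimately show ?thesis by simp
  qed
  finally show ?case .
qed



definition Ak :: "(('d::finite \<Rightarrow> nat) \<Rightarrow> real) \<Rightarrow> nat \<Rightarrow> ('d \<Rightarrow> dyad) \<Rightarrow> real" where
  "Ak a k g = (\<Sum>n\<in>idx k. a n * walshd n g)"

definition Ck :: "(('d::finite \<Rightarrow> nat) \<Rightarrow> real) \<Rightarrow> nat \<Rightarrow> ('d \<Rightarrow> nat) \<Rightarrow> ('d \<Rightarrow> dyad) \<Rightarrow> real" where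
  "Ck a k v g = (\<Sum>n'\<in>idx k. a (\<lambda>l. n' l + 2^k * v l) * walshd n' g)"

lemma psum_Ak: "psum a (\<lambda>_. 2^k) g = Ak a k g"
  by (simp add: psum_def Ak_def idx_def)

lemma Ak_dep: "(\<And>l t. t < k \<Longrightarrow> g l t = h l t) \<Longrightarrow> Ak a k g = Ak a k h"
  unfolding Ak_def by (intro sum.cong refl) (metis walshd_dep)

lemma Ck_dep: "(\<And>l t. t < k \<Longrightarrow> g l t = h l t) \<Longrightarrow> Ck a k v g = Ck a k v h"
  unfolding Ck_def by (intro sum.cong refl) (metis walshd_dep)

lemma Ak_cube: "g \<in> dcube k p \<Longrightarrow> Ak a k g = Ak a k (cube_pt k p)"
  by (rule Ak_dep) (rule dcube_agree[OF _ cube_pt_in])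

lemma Ck_zero: "Ck a k (\<lambda>_. 0) g = Ak a k g"
  by (simp add: Ck_def Ak_def)

lemma Ak_Suc_chi: "Ak a (Suc k) g = (\<Sum>v\<in>bS. chi v (dig k g) * Ck a k v g)"
proof -
  have "Ak a (Suc k) g = (\<Sum>n'\<in>idx k. \<Sum>v\<in>bS. a (\<lambda>l. n' l + 2^k * v l) * walshd (\<lambda>l. n' l + 2^k * v l) g)"
    unfolding Ak_def by (rule sum_idx_Suc_high)
  also have "\<dots> = (\<Sum>n'\<in>idx k. \<Sum>v\<in>bS. chi v (dig k g) * (a (\<lambda>l. n' l + 2^k * v l) * walshd n' g))"
    by (intro sum.cong refl) (simp add: walshd_split)
  also have "\<dots> = (\<Sum>v\<in>bS. \<Sum>n'\<in>idx k. chi v (dig k g) * (a (\<lambda>l. n' l + 2^k * v l) * walshd n' g))"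
    by (rule sum.swap)
  also have "\<dots> = (\<Sum>v\<in>bS. chi v (dig k g) * Ck a k v g)"
    by (simp add: Ck_def sum_distrib_left)
  finally show ?thesis .
qed

lemma zero_bS: "(\<lambda>_. 0) \<in> bS" by (simp add: bS_def)

lemma chi_sum:
  fixes v :: "'d::finite \<Rightarrow> nat"
  assumes "v \<in> bS"
  shows "(\<Sum>\<sigma>\<in>bS. chi v \<sigma>) = (if v = (\<lambda>_. 0) then 2 ^ CARD('d) else 0)"
  using chi_orth[OF assms zero_bS] by (simp add: chi_zero)

lemma Ak_avg:
  fixes p :: "'d::finite \<Rightarrow> nat"
  assumes "p \<in> idx k"
  shows "(\<Sum>\<sigma>\<in>bS. Ak a (Suc k) (cube_pt (Suc k) (\<lambda>l. 2 * p l + \<sigma> l))) = 2 ^ CARD('d) * Ak a k (cube_pt k p)"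
proof -
  have pt: "cube_pt (Suc k) (\<lambda>l. 2 * p l + \<sigma> l) \<in> dcube k p"
    "dig k (cube_pt (Suc k) (\<lambda>l. 2 * p l + \<sigma> l)) = \<sigma>" if "\<sigma> \<in> bS" for \<sigma>
    using cube_pt_in dcube_child[OF that] by blast+
  have C: "Ck a k v (cube_pt (Suc k) (\<lambda>l. 2 * p l + \<sigma> l)) = Ck a k v (cube_pt k p)" if "\<sigma> \<in> bS" for \<sigma> v
    by (rule Ck_dep) (rule dcube_agree[OF pt(1)[OF that] cube_pt_in])
  have "(\<Sum>\<sigma>\<in>bS. Ak a (Suc k) (cube_pt (Suc k) (\<lambda>l. 2 * p l + \<sigma> l))) =
      (\<Sum>\<sigma>\<in>bS. \<Sum>v\<in>bS. chi v \<sigma> * Ck a k v (cube_pt k p))"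
    by (intro sum.cong refl) (simp add: Ak_Suc_chi pt C)
  also have "\<dots> = (\<Sum>v\<in>bS. (\<Sum>\<sigma>\<in>bS. chi v \<sigma>) * Ck a k v (cube_pt k p))"
    by (subst sum.swap) (simp add: sum_distrib_right)
  also have "\<dots> = (\<Sum>v\<in>bS. (if v = (\<lambda>_. 0) then 2 ^ CARD('d) * Ck a k v (cube_pt k p) else 0))"
    by (intro sum.cong refl) (simp add: chi_sum)
  also have "\<dots> = 2 ^ CARD('d) * Ck a k (\<lambda>_. 0) (cube_pt k p)"
    by (simp add: sum.delta zero_bS)
  finally show ?thesis by (simp add: Ck_zero)
qed

lemma exists_big_child:
  fixes p :: "'d::finite \<Rightarrow> nat"
  assumes "p \<in> idx k"
  shows "\<exists>\<sigma>\<in>bS. \<bar>Ak a k (cube_pt k p)\<bar> \<le> \<bar>Ak a (Suc k) (cube_pt (Suc k) (\<lambda>l. 2 * p l + \<sigma> l))\<bar>"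
proof (rule ccontr)
  assume "\<not> ?thesis"
  then have lt: "\<And>\<sigma>. \<sigma> \<in> bS \<Longrightarrow> \<bar>Ak a (Suc k) (cube_pt (Suc k) (\<lambda>l. 2 * p l + \<sigma> l))\<bar> < \<bar>Ak a k (cube_pt k p)\<bar>"
    by auto
  have "(\<Sum>\<sigma>\<in>bS. \<bar>Ak a (Suc k) (cube_pt (Suc k) (\<lambda>l. 2 * p l + \<sigma> l))\<bar>) < (\<Sum>\<sigma>\<in>(bS::('d \<Rightarrow> nat) set). \<bar>Ak a k (cube_pt k p)\<bar>)"
    by (rule sum_strict_mono) (use lt zero_bS in auto)
  also have "\<dots> = 2 ^ CARD('d) * \<bar>Ak a k (cube_pt k p)\<bar>" by (simp add: card_bS)
  also have "\<dots> = \<bar>\<Sum>\<sigma>\<in>bS. Ak a (Suc k) (cube_pt (Suc k) (\<lambda>l. 2 * p l + \<sigma> l))\<bar>"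
    by (simp add: Ak_avg[OF assms] abs_mult)
  also have "\<dots> \<le> (\<Sum>\<sigma>\<in>bS. \<bar>Ak a (Suc k) (cube_pt (Suc k) (\<lambda>l. 2 * p l + \<sigma> l))\<bar>)"
    by (rule sum_abs)
  finally show False by simp
qed

lemma nested_zero:
  fixes p :: "'d::finite \<Rightarrow> nat" and F :: "('d \<Rightarrow> dyad) set"
  assumes lim: "\<And>g. g \<notin> F \<Longrightarrow> (\<lambda>k. Ak a k g) \<longlonglongrightarrow> 0"
    and p: "p \<in> idx k" "dcube k p \<inter> F = {}"
  shows "Ak a k (cube_pt k p) = 0"
proof (rule ccontr)
  assume nz: "Ak a k (cube_pt k p) \<noteq> 0"
  define val where "val j q = Ak a j (cube_pt j q)" for j q
  have "\<forall>j. \<forall>q\<in>idx j. \<exists>\<sigma>\<in>bS. \<bar>val j q\<bar> \<le> \<bar>val (Suc j) (\<lambda>l. 2 * q l + \<sigma> l)\<bar>"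
    unfolding val_def using exists_big_child by blast
  then obtain ch where ch: "\<And>j q. q \<in> idx j \<Longrightarrow> ch j q \<in> bS \<and> \<bar>val j q\<bar> \<le> \<bar>val (Suc j) (\<lambda>l. 2 * q l + ch j q l)\<bar>"
    by metis
  define c where "c = rec_nat p (\<lambda>i q. (\<lambda>l. 2 * q l + ch (k + i) q l))"
  have c0: "c 0 = p" by (simp add: c_def)
  have cS: "c (Suc i) = (\<lambda>l. 2 * c i l + ch (k + i) (c i) l)" for i by (simp add: c_def)
  have cidx: "c i \<in> idx (k + i)" for i
  proof (induction i)
    case 0 then show ?case using p c0 by simp
  next
    case (Suc i)
    have "ch (k + i) (c i) \<in> bS" using ch[OF Suc.IH] by simp
    then have "(\<lambda>l. 2 * c i l + ch (k + i) (c i) l) \<in> idx (Suc (k + i))"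
      by (rule idx_child[OF Suc.IH])
    then show ?case using cS[of i] by simp
  qed
  have cval: "\<bar>val k p\<bar> \<le> \<bar>val (k + i) (c i)\<bar>" for i
  proof (induction i)
    case 0 then show ?case using c0 by simp
  next
    case (Suc i)
    have "\<bar>val (k + i) (c i)\<bar> \<le> \<bar>val (Suc (k + i)) (c (Suc i))\<bar>"
      using ch[OF cidx[of i]] cS[of i] by simp
    then show ?case using Suc.IH by simp
  qed
  have nest1: "dcube (k + Suc i) (c (Suc i)) \<subseteq> dcube (k + i) (c i)" for i
    using dcube_child[OF conjunct1[OF ch[OF cidx[of i]]]] cS[of i] by auto
  have nest: "i \<le> i' \<Longrightarrow> dcube (k + i') (c i') \<subseteq> dcube (k + i) (c i)" for i i'
  proof (induction i' rule: dec_induct)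
    case base then show ?case by simp
  next
    case (step i') then show ?case using nest1[of i'] by blast
  qed
  define G where "G = (\<lambda>l t. cube_pt (k + Suc t) (c (Suc t)) l t)"
  have Gin: "G \<in> dcube (k + i) (c i)" for i
  proof (rule dcube_dep[OF cube_pt_in])
    fix l t assume t: "t < k + i"
    define j where "j = max i (Suc t)"
    have h1: "cube_pt (k + j) (c j) \<in> dcube (k + i) (c i)"
      using nest[of i j] cube_pt_in j_def by auto
    have h2: "cube_pt (k + j) (c j) \<in> dcube (k + Suc t) (c (Suc t))"
      using nest[of "Suc t" j] cube_pt_in j_def by auto
    have "cube_pt (k + i) (c i) l t = cube_pt (k + j) (c j) l t"
      by (rule dcube_agree[OF cube_pt_in h1 t])
    also have "\<dots> = cube_pt (k + Suc t) (c (Suc t)) l t"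
      by (rule dcube_agree[OF h2 cube_pt_in]) simp
    finally show "cube_pt (k + i) (c i) l t = G l t" by (simp add: G_def)
  qed
  have "G \<in> dcube k p" using Gin[of 0] c0 by simp
  then have "G \<notin> F" using p(2) by blast
  then have L: "(\<lambda>j. Ak a j G) \<longlonglongrightarrow> 0" by (rule lim)
  have pos: "0 < \<bar>val k p\<bar>" using nz by (simp add: val_def)
  obtain N where N: "\<And>j. j \<ge> N \<Longrightarrow> norm (Ak a j G - 0) < \<bar>val k p\<bar>"
    using LIMSEQ_D[OF L pos] by blast
  have "Ak a (k + N) G = val (k + N) (c N)"
    unfolding val_def by (rule Ak_cube[OF Gin])
  then have "\<bar>val k p\<bar> \<le> \<bar>Ak a (k + N) G\<bar>" using cval[of N] by simp
  moreover have "\<bar>Ak a (k + N) G\<bar> < \<bar>val k p\<bar>" using N[of "k + N"] by simp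
  ultimately show False by simp
qed

lemma conv_to_lim:
  fixes \<psi> :: "('d::finite \<Rightarrow> nat) \<Rightarrow> real"
  assumes "conv_rect \<psi> g 0 \<or> conv_cube \<psi> g 0"
  shows "(\<lambda>k. Ak \<psi> k g) \<longlonglongrightarrow> 0"
  using assms
proof
  assume a: "conv_rect \<psi> g 0"
  show ?thesis
  proof (rule LIMSEQ_I)
    fix r :: real assume "0 < r"
    then obtain M where M: "\<And>N. (\<forall>l. M \<le> N l) \<Longrightarrow> \<bar>psum \<psi> N g - 0\<bar> < r"
      using a unfolding conv_rect_def by blast
    have "\<forall>k\<ge>M. norm (Ak \<psi> k g - 0) < r"
    proof (intro allI impI)
      fix k assume "M \<le> k"
      then have "M \<le> 2^k" using less_exp[of k] by linarith
      then show "norm (Ak \<psi> k g - 0) < r" using M[of "\<lambda>_. 2^k"] by (simp add: psum_Ak)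
    qed
    then show "\<exists>no. \<forall>k\<ge>no. norm (Ak \<psi> k g - 0) < r" by blast
  qed
next
  assume a: "conv_cube \<psi> g 0"
  have sm: "strict_mono (\<lambda>k::nat. (2::nat)^k)"
    by (rule strict_monoI) simp
  have "((\<lambda>N. psum \<psi> (\<lambda>_. N) g) \<circ> (\<lambda>k. 2^k)) \<longlonglongrightarrow> 0"
    using LIMSEQ_subseq_LIMSEQ[OF a[unfolded conv_cube_def] sm] .
  then show ?thesis by (simp add: o_def psum_Ak)
qed



lemma ms_Suc_gt: "2 * ms s < ms (Suc s)" by simp

lemma ms_strict: "s < s' \<Longrightarrow> ms s < ms s'"
proof (induction s' rule: less_induct)
  case (less s')
  then obtain s'' where s': "s' = Suc s''" by (cases s') auto
  show ?case
  proof (cases "s = s''")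
    case True then show ?thesis using s' by simp
  next
    case False
    then have "ms s < ms s''" using less s' by simp
    then show ?thesis using s' by simp
  qed
qed

lemma ms_mono: "s \<le> s' \<Longrightarrow> ms s \<le> ms s'"
  using ms_strict by (cases "s = s'") (auto simp: order_le_less)

lemma ms_inj: "ms s = ms s' \<Longrightarrow> s = s'"
  using ms_strict by (metis less_irrefl_nat nat_neq_iff)

lemma ms_ge: "s \<le> ms s"
  by (induction s) auto

lemma walsh_pow2: "walsh (2^K) x = (if x K then -1 else 1)"
proof -
  have "{t. bit ((2::nat)^K) t \<and> x t} = (if x K then {K} else {})"
    by (auto simp: bit_exp_iff)
  then show ?thesis by (simp add: walsh_def)
qed

lemma Rk_chi: "Rk K g = chi one_v (dig K g)"
  unfolding Rk_def walshd_def chi_def dig_def by (rule prod.cong) (auto simp: walsh_pow2)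

definition beta :: "nat \<Rightarrow> ('d::finite \<Rightarrow> nat) \<Rightarrow> real" where
  "beta q p = Wk q (\<lambda>l. p l div 2^q) (\<lambda>l. p l mod 2^q)"

lemma sq_pm: "(x::real) * x = 1 \<Longrightarrow> x = 1 \<or> x = -1"
proof -
  assume "x * x = 1"
  then have "(x - 1) * (x + 1) = 0" by (simp add: algebra_simps)
  then have "x - 1 = 0 \<or> x + 1 = 0" by (simp only: mult_eq_0_iff)
  then show ?thesis by auto
qed

lemma beta_pm: "beta q p = 1 \<or> beta q p = -1"
  unfolding beta_def Wk_def by (rule sq_pm[OF walshd_sq])

lemma chi_pm: "chi v \<sigma> = 1 \<or> chi v \<sigma> = -1"
proof -
  have "chi v \<sigma> * chi v \<sigma> = (\<Prod>l\<in>UNIV. (if v l = 1 \<and> \<sigma> l = 1 then -1 else 1) * (if v l = 1 \<and> \<sigma> l = 1 then -1 else (1::real)))"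
    by (simp add: chi_def prod.distrib)
  also have "\<dots> = 1" by (intro prod.neutral) auto
  finally show ?thesis by (rule sq_pm)
qed

lemma idx_2q_decomp:
  assumes "p \<in> idx (2 * q)"
  shows "(\<lambda>l. p l div 2^q) \<in> idx q" "(\<lambda>l. p l mod 2^q) \<in> idx q"
    "(\<lambda>l. 2 ^ q * (p l div 2^q) + p l mod 2^q) = p"
proof -
  have "p l < 2^q * 2^q" for l using assms by (simp add: idx_def power_add[symmetric] mult_2)
  then show "(\<lambda>l. p l div 2^q) \<in> idx q" by (simp add: idx_def less_mult_imp_div_less)
  show "(\<lambda>l. p l mod 2^q) \<in> idx q" by (simp add: idx_def)
  show "(\<lambda>l. 2 ^ q * (p l div 2^q) + p l mod 2^q) = p" by (simp add: fun_eq_iff)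
qed

lemma idx_2q_comp:
  assumes "m \<in> idx q" "m' \<in> idx q"
  shows "(\<lambda>l. 2 ^ q * m l + m' l) \<in> idx (2 * q)"
proof -
  have "2 ^ q * m l + m' l < 2 ^ (2 * q)" for l
  proof -
    have "m l + 1 \<le> 2^q" "m' l < 2^q" using assms by (auto simp: idx_def Suc_le_eq)
    then have "2^q * (m l + 1) \<le> 2^q * 2^q" by (intro mult_le_mono2)
    then have "2^q * m l + 2^q \<le> 2^q * 2^q" by simp
    then show ?thesis using \<open>m' l < 2^q\<close> by (simp add: power_add[symmetric] mult_2)
  qed
  then show ?thesis by (simp add: idx_def)
qed

lemma Fs_iff:
  assumes "p \<in> idx (2 * q)" "g \<in> dcube (2 * q) p"
  shows "g \<in> Fs q \<longleftrightarrow> chi one_v (dig (2 * q) g) = beta q p"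
proof
  assume "g \<in> Fs q"
  then obtain m m' where mm: "m \<in> idx q" "m' \<in> idx q"
    "g \<in> dcube (2 * q) (\<lambda>l. 2 ^ q * m l + m' l)" "Rk (2 * q) g = Wk q m m'"
    unfolding Fs_def by blast
  have "(\<lambda>l. 2 ^ q * m l + m' l) = p"
    by (rule dcube_unique[OF idx_2q_comp[OF mm(1,2)] assms(1) mm(3) assms(2)])
  then have eq: "p l = m' l + m l * 2^q" for l by (auto simp: fun_eq_iff) (metis add.commute mult.commute)
  have "p l div 2^q = m l \<and> p l mod 2^q = m' l" for l
  proof -
    have "m' l < 2^q" using mm(2) by (simp add: idx_def)
    then show ?thesis unfolding eq by simp
  qed
  then have "(\<lambda>l. p l div 2^q) = m" "(\<lambda>l. p l mod 2^q) = m'" by auto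
  then show "chi one_v (dig (2 * q) g) = beta q p"
    using mm(4) by (simp add: beta_def Rk_chi)
next
  assume a: "chi one_v (dig (2 * q) g) = beta q p"
  note d = idx_2q_decomp[OF assms(1)]
  have "g \<in> dcube (2 * q) (\<lambda>l. 2 ^ q * (p l div 2^q) + p l mod 2^q)" using d(3) assms(2) by simp
  moreover have "Rk (2 * q) g = Wk q (\<lambda>l. p l div 2^q) (\<lambda>l. p l mod 2^q)"
    using a by (simp add: Rk_chi beta_def)
  ultimately show "g \<in> Fs q" unfolding Fs_def using d(1,2) by blast
qed

lemma dig_dep: "(\<And>l. g l k = h l k) \<Longrightarrow> dig k g = dig k h"
  by (simp add: dig_def)

lemma Fs_dep:
  assumes "\<And>l t. t \<le> 2 * q \<Longrightarrow> g l t = h l t"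
  shows "g \<in> Fs q \<longleftrightarrow> h \<in> Fs q"
proof -
  obtain p where p: "p \<in> idx (2 * q)" "g \<in> dcube (2 * q) p" using dcube_exists by blast
  have h: "h \<in> dcube (2 * q) p" by (rule dcube_dep[OF p(2)]) (simp add: assms)
  have "dig (2 * q) g = dig (2 * q) h" by (rule dig_dep) (simp add: assms)
  then show ?thesis using Fs_iff[OF p] Fs_iff[OF p(1) h] by simp
qed

definition cons :: "nat \<Rightarrow> ('d::finite \<Rightarrow> dyad) \<Rightarrow> bool" where
  "cons k g \<longleftrightarrow> (\<forall>s. 2 * ms s < k \<longrightarrow> g \<in> Fs (ms s))"

lemma cons_dep:
  assumes "\<And>l t. t < k \<Longrightarrow> g l t = h l t"
  shows "cons k g \<longleftrightarrow> cons k h"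
proof -
  have "g \<in> Fs (ms s) \<longleftrightarrow> h \<in> Fs (ms s)" if "2 * ms s < k" for s
    by (rule Fs_dep) (use that assms in simp)
  then show ?thesis unfolding cons_def by blast
qed

lemma cons_Suc: "cons (Suc k) g \<longleftrightarrow> cons k g \<and> (\<forall>s. 2 * ms s = k \<longrightarrow> g \<in> Fs (ms s))"
  unfolding cons_def by (auto simp: less_Suc_eq)

lemma Fset_cons: "g \<in> Fset \<Longrightarrow> cons k g"
  by (simp add: cons_def Fset_def)

definition flipdig :: "'d \<Rightarrow> nat \<Rightarrow> ('d \<Rightarrow> dyad) \<Rightarrow> ('d \<Rightarrow> dyad)" where
  "flipdig l0 t h = h(l0 := (h l0)(t := \<not> h l0 t))"

lemma dig_flipdig: "dig t (flipdig l0 t h) = flip l0 (dig t h)"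
  by (auto simp: dig_def flipdig_def flip_def fun_eq_iff)

lemma flipdig_other: "(l, t') \<noteq> (l0, t) \<Longrightarrow> flipdig l0 t h l t' = h l t'"
  by (auto simp: flipdig_def)

lemma fix_Fs:
  fixes h :: "'d::finite \<Rightarrow> dyad"
  assumes "h \<notin> Fs q"
  shows "flipdig l0 (2 * q) h \<in> Fs q"
proof -
  obtain p where p: "p \<in> idx (2 * q)" "h \<in> dcube (2 * q) p" using dcube_exists by blast
  have h': "flipdig l0 (2 * q) h \<in> dcube (2 * q) p"
    by (rule dcube_dep[OF p(2)]) (simp add: flipdig_other)
  have "chi one_v (dig (2 * q) h) \<noteq> beta q p" using Fs_iff[OF p] assms by simp
  then have "chi one_v (dig (2 * q) h) = - beta q p"
    using chi_pm[of one_v "dig (2 * q) h"] beta_pm[of q p] by auto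
  moreover have "chi one_v (dig (2 * q) (flipdig l0 (2 * q) h)) = - chi one_v (dig (2 * q) h)"
    by (simp add: dig_flipdig chi_flip dig_bS)
  ultimately show ?thesis using Fs_iff[OF p(1) h'] by simp
qed

definition fixstep :: "nat \<Rightarrow> 'd \<Rightarrow> nat \<Rightarrow> ('d::finite \<Rightarrow> dyad) \<Rightarrow> ('d \<Rightarrow> dyad)" where
  "fixstep k l0 j h = (if 2 * ms j < k \<or> h \<in> Fs (ms j) then h else flipdig l0 (2 * ms j) h)"

primrec hseq :: "nat \<Rightarrow> 'd \<Rightarrow> ('d::finite \<Rightarrow> dyad) \<Rightarrow> nat \<Rightarrow> ('d \<Rightarrow> dyad)" where
  "hseq k l0 g 0 = g"
| "hseq k l0 g (Suc j) = fixstep k l0 j (hseq k l0 g j)"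

lemma fixstep_same: "t \<noteq> 2 * ms j \<or> t < k \<Longrightarrow> fixstep k l0 j h l t = h l t"
  by (auto simp: fixstep_def flipdig_other)

lemma hseq_step: "t \<noteq> 2 * ms j \<or> t < k \<Longrightarrow> hseq k l0 g (Suc j) l t = hseq k l0 g j l t"
  by (simp add: fixstep_same)

lemma hseq_agree:
  assumes "j \<le> j'" "t < 2 * ms j"
  shows "hseq k l0 g j' l t = hseq k l0 g j l t"
  using assms(1)
proof (induction j' rule: dec_induct)
  case base then show ?case by simp
next
  case (step n)
  have "ms j \<le> ms n" using step(1) by (rule ms_mono)
  then have "t \<noteq> 2 * ms n" using assms(2) by simp
  then show ?case using hseq_step[of t n k l0 g l] step(3) by (simp del: hseq.simps)
qed

lemma hseq_low: "t < k \<Longrightarrow> hseq k l0 g j l t = g l t"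
  by (induction j) (simp_all add: fixstep_same)

lemma hseq_Fs:
  assumes "cons k g"
  shows "hseq k l0 g (Suc j) \<in> Fs (ms j)"
proof (cases "2 * ms j < k")
  case True
  have "g \<in> Fs (ms j)" using assms True by (simp add: cons_def)
  moreover have "hseq k l0 g (Suc j) \<in> Fs (ms j) \<longleftrightarrow> g \<in> Fs (ms j)"
    by (rule Fs_dep) (use True in \<open>simp only: hseq_low\<close>)
  ultimately show ?thesis by simp
next
  case False
  then show ?thesis by (auto simp: fixstep_def fix_Fs)
qed

lemma ext_Fset:
  fixes g :: "'d::finite \<Rightarrow> dyad"
  assumes "cons k g"
  shows "\<exists>H\<in>Fset. \<forall>l t. t < k \<longrightarrow> H l t = g l t"
proof -
  obtain l0 :: 'd where True by simp
  define H where "H = (\<lambda>l t. hseq k l0 g (Suc t) l t)"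
  have agree: "H l t = hseq k l0 g (Suc j) l t" if "t \<le> 2 * ms j" for l t j
  proof (cases "t \<le> j")
    case True
    have "t < 2 * ms (Suc t)" using ms_ge[of "Suc t"] by simp
    then show ?thesis unfolding H_def
      by (intro sym[OF hseq_agree]) (use True in simp_all)
  next
    case False
    have "t < 2 * ms (Suc j)" using that ms_Suc_gt[of j] by simp
    then show ?thesis unfolding H_def
      by (intro hseq_agree) (use False in simp_all)
  qed
  have "H \<in> Fs (ms j)" for j
    using Fs_dep[of "ms j" H "hseq k l0 g (Suc j)"] agree hseq_Fs[OF assms] by blast
  then have "H \<in> Fset" by (simp add: Fset_def)
  moreover have "\<forall>l t. t < k \<longrightarrow> H l t = g l t" unfolding H_def using hseq_low by blast
  ultimately show ?thesis by blast
qed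

lemma Fset_nonempty: "(Fset :: ('d::finite \<Rightarrow> dyad) set) \<noteq> {}"
proof -
  have "cons 0 (\<lambda>(l::'d) t. False)" by (simp add: cons_def)
  then show ?thesis using ext_Fset by blast
qed

definition Good :: "nat \<Rightarrow> ('d::finite \<Rightarrow> nat) \<Rightarrow> bool" where
  "Good k p \<longleftrightarrow> dcube k p \<inter> Fset \<noteq> {}"

lemma Good_cons: "Good k p \<longleftrightarrow> cons k (cube_pt k p)"
proof
  assume "Good k p"
  then obtain g where g: "g \<in> dcube k p" "g \<in> Fset" by (auto simp: Good_def)
  have "cons k g" by (rule Fset_cons[OF g(2)])
  moreover have "cons k g \<longleftrightarrow> cons k (cube_pt k p)"
    by (rule cons_dep) (rule dcube_agree[OF g(1) cube_pt_in])
  ultimately show "cons k (cube_pt k p)" by simp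
next
  assume "cons k (cube_pt k p)"
  then obtain H where H: "H \<in> Fset" "\<And>l t. t < k \<Longrightarrow> H l t = cube_pt k p l t"
    using ext_Fset by blast
  have "H \<in> dcube k p" by (rule dcube_dep[OF cube_pt_in]) (simp add: H(2))
  then show "Good k p" using H(1) by (auto simp: Good_def)
qed

definition Gch :: "nat \<Rightarrow> ('d::finite \<Rightarrow> nat) \<Rightarrow> ('d \<Rightarrow> nat) set" where
  "Gch k p = {\<sigma>\<in>bS. Good (Suc k) (\<lambda>l. 2 * p l + \<sigma> l)}"

lemma Good_child:
  assumes "p \<in> idx k" "\<sigma> \<in> bS"
  shows "Good (Suc k) (\<lambda>l. 2 * p l + \<sigma> l) \<longleftrightarrow>
     Good k p \<and> (\<forall>s. 2 * ms s = k \<longrightarrow> chi one_v \<sigma> = beta (ms s) p)"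
proof -
  let ?g = "cube_pt (Suc k) (\<lambda>l. 2 * p l + \<sigma> l)"
  have g: "?g \<in> dcube k p" "dig k ?g = \<sigma>"
    using cube_pt_in dcube_child[OF assms(2)] by blast+
  have "cons k ?g \<longleftrightarrow> cons k (cube_pt k p)"
    by (rule cons_dep) (rule dcube_agree[OF g(1) cube_pt_in])
  moreover have "?g \<in> Fs (ms s) \<longleftrightarrow> chi one_v \<sigma> = beta (ms s) p" if "2 * ms s = k" for s
    using Fs_iff[of p "ms s" ?g] assms(1) g that by simp
  ultimately show ?thesis unfolding Good_cons cons_Suc by auto
qed

lemma Gch_notgood: "p \<in> idx k \<Longrightarrow> \<not> Good k p \<Longrightarrow> Gch k p = {}"
  by (auto simp: Gch_def Good_child)

lemma Gch_free: "p \<in> idx k \<Longrightarrow> Good k p \<Longrightarrow> (\<forall>s. 2 * ms s \<noteq> k) \<Longrightarrow> Gch k p = bS"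
  by (auto simp: Gch_def Good_child)

lemma Gch_constr: "p \<in> idx k \<Longrightarrow> Good k p \<Longrightarrow> 2 * ms s = k \<Longrightarrow>
   Gch k p = {\<sigma>\<in>bS. chi one_v \<sigma> = beta (ms s) p}"
  by (auto simp: Gch_def Good_child dest: ms_inj)

lemma Good_parent: "m \<in> idx (Suc k) \<Longrightarrow> Good (Suc k) m \<Longrightarrow> Good k (\<lambda>l. m l div 2)"
  using idx_decomp_child[of m k] Good_child by metis



abbreviation tauF :: "nat \<Rightarrow> ('d::finite \<Rightarrow> nat) \<Rightarrow> real" where
  "tauF \<equiv> tauE (Fset :: ('d \<Rightarrow> dyad) set)"

lemma child_div2: "\<sigma> \<in> bS \<Longrightarrow> (\<lambda>l. (2 * p l + \<sigma> l) div 2) = p"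
  by (auto simp: bS_def fun_eq_iff)

lemma Gch_alt: "p \<in> idx k \<Longrightarrow> {\<sigma>'. (\<forall>l. \<sigma>' l < 2) \<and> dcube (Suc k) (\<lambda>l. 2 * p l + \<sigma>' l) \<inter> Fset \<noteq> {}} = Gch k p"
  by (auto simp: Gch_def Good_def bS_def)

lemma tau_child:
  fixes p :: "'d::finite \<Rightarrow> nat"
  assumes "p \<in> idx k" "\<sigma> \<in> bS"
  shows "tauF (Suc k) (\<lambda>l. 2 * p l + \<sigma> l) = (if \<sigma> \<in> Gch k p then tauF k p / card (Gch k p) else 0)"
proof -
  have d: "(2 * p l + \<sigma> l) div 2 = p l" for l using child_div2[OF assms(2), of p] by (simp add: fun_eq_iff)
  have g: "dcube (Suc k) (\<lambda>l. 2 * p l + \<sigma> l) \<inter> Fset = {} \<longleftrightarrow> \<sigma> \<notin> Gch k p"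
    using assms(2) by (auto simp: Gch_def Good_def)
  show ?thesis
    by (simp only: tauE.simps d g Gch_alt[OF assms(1)]) auto
qed

declare tauE.simps(2)[simp del]

lemma finite_Gch[simp]: "finite (Gch k p)"
  by (simp add: Gch_def)

lemma chi_at0: "chi v (\<lambda>_. 0) = 1" by (simp add: chi_def)

lemma one_flip0: "chi one_v (flip l0 (\<lambda>_. 0)) = -1"
  using chi_flip[OF zero_bS, of one_v l0] by (simp add: chi_at0)

lemma flip0_bS: "flip l0 (\<lambda>_. 0) \<in> bS" by (rule flip_bS[OF zero_bS])

lemma Gch_nonempty:
  assumes "p \<in> idx k" "Good k p"
  shows "Gch k p \<noteq> {}"
proof (cases "\<forall>s. 2 * ms s \<noteq> k")
  case True
  then show ?thesis using Gch_free[OF assms True] zero_bS by auto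
next
  case False
  then obtain s where s: "2 * ms s = k" by auto
  obtain l0 :: 'a where True by simp
  have "(\<lambda>_. 0) \<in> Gch k p \<or> flip l0 (\<lambda>_. 0) \<in> Gch k p"
    using Gch_constr[OF assms s] beta_pm[of "ms s" p] zero_bS flip0_bS one_flip0[of l0]
    by (auto simp: chi_at0)
  then show ?thesis by auto
qed

lemma Gch_not_all:
  assumes "p \<in> idx k" "Good k p" "2 * ms s = k"
  shows "Gch k p \<noteq> bS"
proof -
  obtain l0 :: 'a where True by simp
  have "(\<lambda>_. 0) \<notin> Gch k p \<or> flip l0 (\<lambda>_. 0) \<notin> Gch k p"
    using Gch_constr[OF assms] beta_pm[of "ms s" p] one_flip0[of l0]
    by (auto simp: chi_at0)
  then show ?thesis using zero_bS flip0_bS by auto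
qed

lemma tau_pos:
  "p \<in> idx k \<Longrightarrow> Good k p \<Longrightarrow> 0 < (tauF k p :: real)"
proof (induction k arbitrary: p)
  case 0 then show ?case by simp
next
  case (Suc k)
  note d = idx_decomp_child[OF Suc.prems(1)]
  define q where "q = (\<lambda>l. p l div 2)"
  define \<sigma> where "\<sigma> = (\<lambda>l. p l mod 2)"
  have q: "q \<in> idx k" "\<sigma> \<in> bS" "p = (\<lambda>l. 2 * q l + \<sigma> l)"
    unfolding q_def \<sigma>_def by (rule d)+
  have gs: "\<sigma> \<in> Gch k q" using Suc.prems(2) q by (simp add: Gch_def)
  then have "Good k q" using Gch_notgood[OF q(1)] by auto
  then have "0 < tauF k q" by (rule Suc.IH[OF q(1)])
  moreover have "0 < card (Gch k q)" using gs by (auto simp: card_gt_0_iff)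
  ultimately show ?case using tau_child[OF q(1) q(2)] gs q(3) by simp
qed

lemma tau_notgood: "p \<in> idx (Suc k) \<Longrightarrow> \<not> Good (Suc k) p \<Longrightarrow> tauF (Suc k) p = 0"
  by (simp add: Good_def tauE.simps(2))

lemma rank_of_eq:
  assumes "n \<in> idx K" "\<And>K'. n \<in> idx K' \<Longrightarrow> K \<le> K'"
  shows "rank_of n = K"
  unfolding rank_of_def
  by (rule Least_equality) (use assms in \<open>auto simp: idx_def\<close>)

lemma rank_of_in: "n \<in> idx (rank_of n)"
proof -
  have "n \<in> idx (\<Sum>l\<in>UNIV. n l)"
  proof -
    have "n l < 2 ^ (\<Sum>l\<in>UNIV. n l)" for l
    proof -
      have "n l \<le> (\<Sum>l\<in>UNIV. n l)" by (rule member_le_sum) auto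
      then have "(2::nat) ^ n l \<le> 2 ^ (\<Sum>l\<in>UNIV. n l)" by (rule power_increasing) simp
      moreover have "n l < 2 ^ n l" by (rule less_exp)
      ultimately show ?thesis by linarith
    qed
    then show ?thesis by (simp add: idx_def)
  qed
  then have "\<forall>l. n l < 2 ^ (\<Sum>l\<in>UNIV. n l)" by (simp add: idx_def)
  then have "\<forall>l. n l < 2 ^ (LEAST k. \<forall>l. n l < 2 ^ k)" by (rule LeastI)
  then show ?thesis by (simp add: rank_of_def idx_def)
qed

lemma high_not_idx:
  assumes "n' \<in> idx k" "v \<in> bS" "v \<noteq> (\<lambda>_. 0)"
  shows "(\<lambda>l. n' l + 2^k * v l) \<notin> idx k"
proof -
  obtain l where "v l \<noteq> 0" using assms(3) by auto
  then have "2^k * 1 \<le> 2^k * v l" by (intro mult_le_mono2) simp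
  then have "2^k \<le> n' l + 2^k * v l" by linarith
  then show ?thesis by (auto simp: idx_def not_less)
qed

lemma high_big:
  fixes n' v :: "'d::finite \<Rightarrow> nat"
  assumes "v \<noteq> (\<lambda>_. 0)"
  shows "\<exists>l. 2^k \<le> n' l + 2^k * v l"
proof -
  obtain l where "v l \<noteq> 0" using assms by auto
  then have "2^k * 1 \<le> 2^k * v l" by (intro mult_le_mono2) simp
  then have "2^k \<le> n' l + 2^k * v l" by linarith
  then show ?thesis by blast
qed

lemma rank_high:
  assumes "n' \<in> idx k" "v \<in> bS" "v \<noteq> (\<lambda>_. 0)"
  shows "rank_of (\<lambda>l. n' l + 2^k * v l) = Suc k"
proof (rule rank_of_eq)
  show "(\<lambda>l. n' l + 2^k * v l) \<in> idx (Suc k)" by (rule idx_high[OF assms(1,2)])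
  fix K' assume a: "(\<lambda>l. n' l + 2^k * v l) \<in> idx K'"
  show "Suc k \<le> K'"
  proof (rule ccontr)
    assume "\<not> Suc k \<le> K'"
    then have "K' \<le> k" by simp
    then have "(\<lambda>l. n' l + 2^k * v l) \<in> idx k" using idx_mono a by blast
    then show False using high_not_idx[OF assms] by simp
  qed
qed

lemma qhat_high:
  fixes \<tau> :: "nat \<Rightarrow> ('d::finite \<Rightarrow> nat) \<Rightarrow> real"
  assumes "n' \<in> idx k" "v \<in> bS" "v \<noteq> (\<lambda>_. 0)"
  shows "qhat \<tau> (\<lambda>l. n' l + 2^k * v l) =
    (\<Sum>p\<in>idx k. Wk k n' p * (\<Sum>\<sigma>\<in>bS. chi v \<sigma> * \<tau> (Suc k) (\<lambda>l. 2 * p l + \<sigma> l)))"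
proof -
  have "qhat \<tau> (\<lambda>l. n' l + 2^k * v l) =
     (\<Sum>m\<in>idx (Suc k). Wk (Suc k) (\<lambda>l. n' l + 2^k * v l) m * \<tau> (Suc k) m)"
    by (simp add: qhat_def rank_high[OF assms])
  also have "\<dots> = (\<Sum>p\<in>idx k. \<Sum>\<sigma>\<in>bS. Wk k n' p * (chi v \<sigma> * \<tau> (Suc k) (\<lambda>l. 2 * p l + \<sigma> l)))"
    unfolding sum_idx_Suc by (intro sum.cong refl) (simp add: Wk_split assms)
  also have "\<dots> = (\<Sum>p\<in>idx k. Wk k n' p * (\<Sum>\<sigma>\<in>bS. chi v \<sigma> * \<tau> (Suc k) (\<lambda>l. 2 * p l + \<sigma> l)))"
    by (simp add: sum_distrib_left)
  finally show ?thesis .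
qed

lemma inner_zero:
  fixes p :: "'d::finite \<Rightarrow> nat"
  assumes "p \<in> idx k" "v \<in> bS" "v \<noteq> (\<lambda>_. 0)"
    and nf: "(\<forall>s. 2 * ms s \<noteq> k) \<or> v \<noteq> one_v"
  shows "(\<Sum>\<sigma>\<in>bS. chi v \<sigma> * tauF (Suc k) (\<lambda>l. 2 * p l + \<sigma> l)) = 0"
proof -
  have "(\<Sum>\<sigma>\<in>bS. chi v \<sigma> * tauF (Suc k) (\<lambda>l. 2 * p l + \<sigma> l)) =
     (\<Sum>\<sigma>\<in>bS. if \<sigma> \<in> Gch k p then chi v \<sigma> * (tauF k p / card (Gch k p)) else 0)"
    by (intro sum.cong refl) (simp only: tau_child[OF assms(1)]; simp)
  also have "\<dots> = (\<Sum>\<sigma>\<in>Gch k p. chi v \<sigma> * (tauF k p / card (Gch k p)))"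
    unfolding Gch_def by (subst sum.inter_filter) (auto simp: Gch_def)
  also have "\<dots> = (\<Sum>\<sigma>\<in>Gch k p. chi v \<sigma>) * (tauF k p / card (Gch k p))"
    by (rule sum_distrib_right[symmetric])
  also have "(\<Sum>\<sigma>\<in>Gch k p. chi v \<sigma>) = 0"
  proof (cases "Good k p")
    case False then show ?thesis using Gch_notgood[OF assms(1)] by simp
  next
    case True
    show ?thesis
    proof (cases "\<forall>s. 2 * ms s \<noteq> k")
      case True2: True
      then show ?thesis using Gch_free[OF assms(1) True True2] chi_sum0[OF assms(2,3)] by simp
    next
      case False
      then obtain s where s: "2 * ms s = k" by auto
      then have "v \<noteq> one_v" using nf by auto
      then show ?thesis using Gch_constr[OF assms(1) True s] chi_sum_par[OF assms(2,3)] by simp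
    qed
  qed
  finally show ?thesis by simp
qed

lemma qhat_zero:
  fixes n' :: "'d::finite \<Rightarrow> nat"
  assumes "n' \<in> idx k" "v \<in> bS" "v \<noteq> (\<lambda>_. 0)"
    and nf: "(\<forall>s. 2 * ms s \<noteq> k) \<or> v \<noteq> one_v"
  shows "qhat tauF (\<lambda>l. n' l + 2^k * v l) = 0"
  unfolding qhat_high[OF assms(1-3)] using inner_zero[OF _ assms(2-4)] by simp



lemma Ak_child:
  fixes p :: "'d::finite \<Rightarrow> nat"
  assumes "p \<in> idx k" "\<sigma> \<in> bS"
  shows "Ak a (Suc k) (cube_pt (Suc k) (\<lambda>l. 2 * p l + \<sigma> l)) = (\<Sum>v\<in>bS. chi v \<sigma> * Ck a k v (cube_pt k p))"
proof -
  have pt: "cube_pt (Suc k) (\<lambda>l. 2 * p l + \<sigma> l) \<in> dcube k p"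
    "dig k (cube_pt (Suc k) (\<lambda>l. 2 * p l + \<sigma> l)) = \<sigma>"
    using cube_pt_in dcube_child[OF assms(2)] by blast+
  have C: "Ck a k v (cube_pt (Suc k) (\<lambda>l. 2 * p l + \<sigma> l)) = Ck a k v (cube_pt k p)" for v
    by (rule Ck_dep) (rule dcube_agree[OF pt(1) cube_pt_in])
  show ?thesis by (simp add: Ak_Suc_chi pt C)
qed

lemma one_v_bS: "one_v \<in> bS" by (simp add: bS_def)

lemma one_v_ne: "one_v \<noteq> (\<lambda>_. 0)" by (simp add: fun_eq_iff)

lemma sum_two:
  fixes f :: "('d::finite \<Rightarrow> nat) \<Rightarrow> real"
  assumes "\<And>v. v \<in> bS \<Longrightarrow> v \<noteq> (\<lambda>_. 0) \<Longrightarrow> v \<noteq> one_v \<Longrightarrow> f v = 0"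
  shows "(\<Sum>v\<in>bS. f v) = f (\<lambda>_. 0) + f one_v"
proof -
  have "(\<Sum>v\<in>bS. f v) = (\<Sum>v\<in>{(\<lambda>_. 0), one_v}. f v)"
    by (rule sum.mono_neutral_right) (use assms zero_bS one_v_bS in auto)
  also have "\<dots> = f (\<lambda>_. 0) + f one_v" by (subst sum.insert) (auto simp: fun_eq_iff)
  finally show ?thesis .
qed

lemma sum_one:
  fixes f :: "('d::finite \<Rightarrow> nat) \<Rightarrow> real"
  assumes "\<And>v. v \<in> bS \<Longrightarrow> v \<noteq> (\<lambda>_. 0) \<Longrightarrow> f v = 0"
  shows "(\<Sum>v\<in>bS. f v) = f (\<lambda>_. 0)"
proof -
  have "(\<Sum>v\<in>bS. f v) = (\<Sum>v\<in>{(\<lambda>_. 0)}. f v)"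
    by (rule sum.mono_neutral_right) (use assms zero_bS in auto)
  then show ?thesis by simp
qed

lemma Ak0: "Ak a 0 g = a (\<lambda>_. 0)"
  by (simp add: Ak_def idx0 walshd_def walsh_def)

theorem theorem3:
  fixes \<psi> :: "('d::finite \<Rightarrow> nat) \<Rightarrow> real"
  assumes d2: "CARD('d) \<ge> 2"
    and conv: "(\<forall>g. g \<notin> (Fset :: ('d \<Rightarrow> dyad) set) \<longrightarrow> conv_rect \<psi> g 0)
             \<or> (\<forall>g. g \<notin> (Fset :: ('d \<Rightarrow> dyad) set) \<longrightarrow> conv_cube \<psi> g 0)"
    and small: "\<exists>\<epsilon> :: ('d \<Rightarrow> nat) \<Rightarrow> real.
       (\<forall>\<delta>>0. \<exists>M. \<forall>n. (\<exists>l. M \<le> n l) \<longrightarrow> \<bar>\<epsilon> n\<bar> < \<delta>) \<and>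
       (\<forall>n. \<bar>\<psi> n\<bar> \<le> \<epsilon> n * \<bar>qhat (tauE (Fset :: ('d \<Rightarrow> dyad) set)) n\<bar>)"
  shows "\<forall>n. \<psi> n = 0"
proof -
  let ?d = "CARD('d)"
  define A where "A k p = Ak \<psi> k (cube_pt k p)" for k p
  define \<psi>0 where "\<psi>0 = \<psi> (\<lambda>_. 0)"
  have lim: "(\<lambda>k. Ak \<psi> k g) \<longlonglongrightarrow> 0" if "g \<notin> Fset" for g
    using conv that by (intro conv_to_lim) blast
  have Z: "A k p = 0" if "p \<in> idx k" "\<not> Good k p" for k p
    unfolding A_def
    by (rule nested_zero[where F = Fset]) (use lim that in \<open>auto simp: Good_def\<close>)
  obtain \<epsilon> where eps: "\<forall>\<delta>>0. \<exists>M. \<forall>n. (\<exists>l. M \<le> n l) \<longrightarrow> \<bar>\<epsilon> n\<bar> < \<delta>"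
    and sm: "\<And>n. \<bar>\<psi> n\<bar> \<le> \<epsilon> n * \<bar>qhat tauF n\<bar>"
    using small by blast
  have Q: "\<psi> n = 0" if "qhat tauF n = 0" for n
    using sm[of n] that by simp
  have psi_hi: "\<psi> (\<lambda>l. n' l + 2^k * v l) = 0"
    if "n' \<in> idx k" "v \<in> bS" "v \<noteq> (\<lambda>_. 0)" "(\<forall>s. 2 * ms s \<noteq> k) \<or> v \<noteq> one_v" for n' v k
    by (rule Q) (rule qhat_zero[OF that])
  have Ck0: "Ck \<psi> k v g = 0"
    if "v \<in> bS" "v \<noteq> (\<lambda>_. 0)" "(\<forall>s. 2 * ms s \<noteq> k) \<or> v \<noteq> one_v" for v k g
    unfolding Ck_def using psi_hi[OF _ that] by simp
  have const: "\<exists>X. \<forall>\<sigma>\<in>Gch k p. A (Suc k) (\<lambda>l. 2 * p l + \<sigma> l) = X"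
    if p: "p \<in> idx k" "Good k p" for k p
  proof (cases "\<forall>s. 2 * ms s \<noteq> k")
    case True
    have "A (Suc k) (\<lambda>l. 2 * p l + \<sigma> l) = A k p" if "\<sigma> \<in> bS" for \<sigma>
    proof -
      have "A (Suc k) (\<lambda>l. 2 * p l + \<sigma> l) = (\<Sum>v\<in>bS. chi v \<sigma> * Ck \<psi> k v (cube_pt k p))"
        unfolding A_def by (rule Ak_child[OF p(1) that])
      also have "\<dots> = chi (\<lambda>_. 0) \<sigma> * Ck \<psi> k (\<lambda>_. 0) (cube_pt k p)"
        by (rule sum_one) (simp add: Ck0 True)
      finally show ?thesis by (simp add: chi_zero Ck_zero A_def)
    qed
    then show ?thesis using Gch_def by blast
  next
    case False
    then obtain s where s: "2 * ms s = k" by auto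
    have "A (Suc k) (\<lambda>l. 2 * p l + \<sigma> l) = A k p + beta (ms s) p * Ck \<psi> k one_v (cube_pt k p)"
      if "\<sigma> \<in> Gch k p" for \<sigma>
    proof -
      have sg: "\<sigma> \<in> bS" "chi one_v \<sigma> = beta (ms s) p"
        using that Gch_constr[OF p s] by auto
      have "A (Suc k) (\<lambda>l. 2 * p l + \<sigma> l) = (\<Sum>v\<in>bS. chi v \<sigma> * Ck \<psi> k v (cube_pt k p))"
        unfolding A_def by (rule Ak_child[OF p(1) sg(1)])
      also have "\<dots> = chi (\<lambda>_. 0) \<sigma> * Ck \<psi> k (\<lambda>_. 0) (cube_pt k p) + chi one_v \<sigma> * Ck \<psi> k one_v (cube_pt k p)"
        by (rule sum_two) (simp add: Ck0)
      finally show ?thesis using sg(2) by (simp add: chi_zero Ck_zero A_def)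
    qed
    then show ?thesis by blast
  qed
  have IND: "\<forall>p\<in>idx k. A k p = \<psi>0 * 2 ^ (?d * k) * tauF k p" for k
  proof (induction k)
    case 0
    show ?case by (simp add: A_def Ak0 \<psi>0_def idx0)
  next
    case (Suc k)
    show ?case
    proof
      fix m :: "'d \<Rightarrow> nat" assume m: "m \<in> idx (Suc k)"
      define p where "p = (\<lambda>l. m l div 2)"
      define \<sigma> where "\<sigma> = (\<lambda>l. m l mod 2)"
      have ps: "p \<in> idx k" "\<sigma> \<in> bS" "m = (\<lambda>l. 2 * p l + \<sigma> l)"
        unfolding p_def \<sigma>_def by (rule idx_decomp_child[OF m])+
      show "A (Suc k) m = \<psi>0 * 2 ^ (?d * Suc k) * tauF (Suc k) m"
      proof (cases "Good (Suc k) m")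
        case False
        then show ?thesis using Z[OF m False] tau_notgood[OF m False] by simp
      next
        case True
        then have sG: "\<sigma> \<in> Gch k p" using ps by (simp add: Gch_def)
        then have gp: "Good k p" using Gch_notgood[OF ps(1)] by auto
        obtain X where X: "\<And>\<sigma>'. \<sigma>' \<in> Gch k p \<Longrightarrow> A (Suc k) (\<lambda>l. 2 * p l + \<sigma>' l) = X"
          using const[OF ps(1) gp] by blast
        have sub: "Gch k p \<subseteq> bS" by (auto simp: Gch_def)
        have "(\<Sum>\<sigma>'\<in>bS. A (Suc k) (\<lambda>l. 2 * p l + \<sigma>' l)) = (\<Sum>\<sigma>'\<in>Gch k p. A (Suc k) (\<lambda>l. 2 * p l + \<sigma>' l))"
        proof (rule sum.mono_neutral_right[symmetric, OF finite_bS sub, symmetric])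
          show "\<forall>i\<in>bS - Gch k p. A (Suc k) (\<lambda>l. 2 * p l + i l) = 0"
          proof
            fix i assume "i \<in> bS - Gch k p"
            then show "A (Suc k) (\<lambda>l. 2 * p l + i l) = 0"
              using Z[OF idx_child[OF ps(1)]] by (auto simp: Gch_def)
          qed
        qed
        also have "\<dots> = real (card (Gch k p)) * X" using X by simp
        finally have s1: "(\<Sum>\<sigma>'\<in>bS. A (Suc k) (\<lambda>l. 2 * p l + \<sigma>' l)) = real (card (Gch k p)) * X" .
        have s2: "(\<Sum>\<sigma>'\<in>bS. A (Suc k) (\<lambda>l. 2 * p l + \<sigma>' l)) = 2 ^ ?d * A k p"
          unfolding A_def by (rule Ak_avg[OF ps(1)])
        have cpos: "0 < card (Gch k p)" using sG by (auto simp: card_gt_0_iff)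
        have xc: "X * real (card (Gch k p)) = 2 ^ ?d * A k p" using s1 s2 by (simp add: mult.commute)
        have "X = 2 ^ ?d * A k p / card (Gch k p)" 
        proof -
          have "real (card (Gch k p)) \<noteq> 0" using cpos by linarith
          then show ?thesis using xc by (simp add: eq_divide_eq)
        qed
        also have "\<dots> = \<psi>0 * (2 ^ ?d * 2 ^ (?d * k)) * (tauF k p / card (Gch k p))"
          using Suc.IH ps(1) by simp
        also have "\<dots> = \<psi>0 * 2 ^ (?d * Suc k) * tauF (Suc k) m"
          using tau_child[OF ps(1,2)] sG ps(3) by (simp add: power_add[symmetric])
        finally show ?thesis using X[OF sG] ps(3) by simp
      qed
    qed
  qed
  have EX: "\<psi> n = \<psi>0 * qhat tauF n" for n
  proof -
    define K where "K = rank_of n"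
    have nK: "n \<in> idx K" unfolding K_def by (rule rank_of_in)
    have "(\<Sum>m\<in>idx K. Wk K n m * A K m) = (\<Sum>m\<in>idx K. \<Sum>n'\<in>idx K. \<psi> n' * (Wk K n m * Wk K n' m))"
      unfolding A_def Ak_def Wk_def[symmetric] by (simp add: sum_distrib_left mult_ac)
    also have "\<dots> = (\<Sum>n'\<in>idx K. \<psi> n' * (\<Sum>m\<in>idx K. Wk K n m * Wk K n' m))"
      by (subst sum.swap) (simp add: sum_distrib_left)
    also have "\<dots> = (\<Sum>n'\<in>idx K. \<psi> n' * (if n = n' then 2 ^ (?d * K) else 0))"
      by (intro sum.cong refl) (simp add: Wk_orth[OF nK])
    also have "\<dots> = (\<Sum>n'\<in>idx K. if n = n' then \<psi> n * 2 ^ (?d * K) else 0)"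
      by (intro sum.cong refl) auto
    also have "\<dots> = \<psi> n * 2 ^ (?d * K)"
      using nK by (simp add: sum.delta sum.delta')
    finally have e1: "(\<Sum>m\<in>idx K. Wk K n m * A K m) = \<psi> n * 2 ^ (?d * K)" .
    have "(\<Sum>m\<in>idx K. Wk K n m * A K m) = (\<Sum>m\<in>idx K. Wk K n m * (\<psi>0 * 2 ^ (?d * K) * tauF K m))"
      using IND[of K] by (intro sum.cong refl) simp
    also have "\<dots> = \<psi>0 * 2 ^ (?d * K) * qhat tauF n"
      by (simp add: qhat_def K_def[symmetric] Let_def sum_distrib_left mult_ac)
    finally show ?thesis using e1 by simp
  qed
  have psi0: "\<psi>0 = 0"
  proof (rule ccontr)
    assume nz: "\<psi>0 \<noteq> 0"
    then obtain M where M: "\<And>n. (\<exists>l. M \<le> n l) \<Longrightarrow> \<bar>\<epsilon> n\<bar> < \<bar>\<psi>0\<bar>"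
      using eps by (meson zero_less_abs_iff)
    have big0: "\<psi> n = 0" if "\<exists>l. M \<le> n l" for n
    proof (cases "qhat tauF n = 0")
      case True then show ?thesis by (rule Q)
    next
      case False
      have "\<bar>\<psi>0\<bar> * \<bar>qhat tauF n\<bar> \<le> \<epsilon> n * \<bar>qhat tauF n\<bar>"
        using sm[of n] EX[of n] by (simp add: abs_mult)
      also have "\<dots> \<le> \<bar>\<epsilon> n\<bar> * \<bar>qhat tauF n\<bar>" by (intro mult_right_mono) auto
      also have "\<dots> < \<bar>\<psi>0\<bar> * \<bar>qhat tauF n\<bar>" using M[OF that] False by (intro mult_strict_right_mono) auto
      finally show ?thesis by simp
    qed
    define k where "k = 2 * ms M"
    have Mk: "M \<le> 2 ^ k"
    proof -
      have "M \<le> k" using ms_ge[of M] by (simp add: k_def)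
      also have "k \<le> 2 ^ k" using less_exp[of k] by simp
      finally show ?thesis .
    qed
    have Ckz: "Ck \<psi> k v g = 0" if "v \<in> bS" "v \<noteq> (\<lambda>_. 0)" for v g
    proof -
      have "\<psi> (\<lambda>l. n' l + 2^k * v l) = 0" for n'
        using big0 high_big[OF that(2), of k n'] Mk by (meson le_trans)
      then show ?thesis by (simp add: Ck_def)
    qed
    obtain H where H: "H \<in> (Fset :: ('d \<Rightarrow> dyad) set)" using Fset_nonempty by blast
    obtain p where p: "p \<in> idx k" "H \<in> dcube k p" using dcube_exists by blast
    have gp: "Good k p" using H p by (auto simp: Good_def)
    obtain \<sigma> where sG: "\<sigma> \<in> Gch k p" using Gch_nonempty[OF p(1) gp] by blast
    have sb: "\<sigma> \<in> bS" using sG by (simp add: Gch_def)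
    have "A (Suc k) (\<lambda>l. 2 * p l + \<sigma> l) = (\<Sum>v\<in>bS. chi v \<sigma> * Ck \<psi> k v (cube_pt k p))"
      unfolding A_def by (rule Ak_child[OF p(1) sb])
    also have "\<dots> = chi (\<lambda>_. 0) \<sigma> * Ck \<psi> k (\<lambda>_. 0) (cube_pt k p)"
      by (rule sum_one) (simp add: Ckz)
    finally have eqA: "A (Suc k) (\<lambda>l. 2 * p l + \<sigma> l) = A k p" by (simp add: chi_zero Ck_zero A_def)
    have m: "(\<lambda>l. 2 * p l + \<sigma> l) \<in> idx (Suc k)" by (rule idx_child[OF p(1) sb])
    have tp: "0 < tauF k p" by (rule tau_pos[OF p(1) gp])
    have cpos: "0 < card (Gch k p)" using sG by (auto simp: card_gt_0_iff)
    have "\<psi>0 * 2 ^ (?d * Suc k) * (tauF k p / card (Gch k p)) = \<psi>0 * 2 ^ (?d * k) * tauF k p"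
      using eqA IND[of "Suc k"] IND[of k] m p(1) tau_child[OF p(1) sb] sG by simp
    moreover
    define Y where "Y = \<psi>0 * 2 ^ (?d * k) * tauF k p"
    have Y0: "Y \<noteq> 0" using nz tp by (simp add: Y_def)
    have "\<psi>0 * 2 ^ (?d * Suc k) * (tauF k p / card (Gch k p)) = Y * 2 ^ ?d / card (Gch k p)"
      by (simp add: Y_def power_add mult_ac)
    ultimately have e: "Y * 2 ^ ?d / card (Gch k p) = Y" by (simp add: Y_def)
    have c0: "real (card (Gch k p)) \<noteq> 0" using cpos by linarith
    have "Y * 2 ^ ?d = Y * real (card (Gch k p))" using e c0 by (simp add: divide_eq_eq)
    then have "2 ^ ?d = real (card (Gch k p))" using Y0 by simp
    then have "card (Gch k p) = card (bS :: ('d \<Rightarrow> nat) set)"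
      by (simp add: card_bS)
    then have "Gch k p = bS"
      by (intro card_subset_eq) (auto simp: Gch_def)
    then show False using Gch_not_all[OF p(1) gp, of M] k_def by simp
  qed
  show ?thesis using EX psi0 by simp
qed


end
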